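(* In the $P$-dimensional classification setting described in the context, let $\delta\in(0,1)$ and $\gamma>0$, and suppose $\mathcal{D}^P_{\mathrm{pop}}\neq0$. If the training set size $M$ satisfies $M\ge\frac{128\ln(\frac2\delta)(\ln(\max_{\mathcal{J}\subseteq[N^P]}D_{\mathcal{J}}))^4}{\|\mathcal{D}^P_{\mathrm{pop}}\|^2\gamma^4}$, then with probability at least $1-\delta$: $|\mathrm{QE}(\mathcal{D}^P_{\mathrm{emp}};\mathcal{J})-\mathrm{QE}(\mathcal{D}^P_{\mathrm{pop}};\mathcal{J})|\le\gamma$ for all $\mathcal{J}\subseteq[N^P]$.
   Context: $P,N$ positive integers, $D_1,\ldots,D_{N^P}$ positive integers; norms are Frobenius. For $\mathcal{A}\in\mathbb{R}^{D_1\times\cdots\times D_{N^P}}$ and $\mathcal{J}\subseteq[N^P]$, $[\![\mathcal{A};\mathcal{J}]\!]$ is its matrix arrangement with rows indexed by axes $\mathcal{J}$, columns by the other axes; $D_{\mathcal{J}}:=\min\{\prod_{n\in\mathcal{J}}D_n,\prod_{n\notin\mathcal{J}}D_n\}$; $\mathrm{QE}(\mathcal{A};\mathcal{J}):=-\sum_d\rho_d\ln\rho_d$, $\rho_d=\sigma_d^2/\sum_{d'}\sigma_{d'}^2$ over the singular values of $[\![\mathcal{A};\mathcal{J}]\!]$ ($\mathrm{QE}(0;\mathcal{J})=0$). Fix a bijection $\mu:[N]^P\to[N^P]$. Classification setting: a distribution over pairs $(\{\mathbf{x}^{(\mathbf{n})}\}_{\mathbf{n}\in[N]^P},y)$ with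 $\mathbf{x}^{(\mathbf{n})}\in\mathbb{R}^{D_{\mu(\mathbf{n})}}$, $\|\mathbf{x}^{(\mathbf{n})}\|\le1$, $y\in\{1,-1\}$. $\mathcal{D}^P_{\mathrm{pop}}:=\mathbb{E}[y\cdot\otimes_{n=1}^{N^P}\mathbf{x}^{(\mu^{-1}(n))}]$; given $M$ i.i.d. samples $(\{\mathbf{x}^{(\mathbf{n},m)}\},y^{(m)})$, $\mathcal{D}^P_{\mathrm{emp}}:=\frac1M\sum_{m=1}^My^{(m)}\cdot\otimes_{n=1}^{N^P}\mathbf{x}^{(\mu^{-1}(n),m)}$. *)

theory Defs
  imports "HOL-Probability.Probability"
begin

definition svd_pos :: "'r set \<Rightarrow> 'c set \<Rightarrow> ('r \<Rightarrow> 'c \<Rightarrow> real) \<Rightarrow> real multiset \<Rightarrow> bool" where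
  "svd_pos Rs Cs A S \<longleftrightarrow>
     (\<exists>k (\<sigma>::nat \<Rightarrow> real) (u::nat \<Rightarrow> 'r \<Rightarrow> real) (v::nat \<Rightarrow> 'c \<Rightarrow> real).
        S = mset (map \<sigma> [0..<k]) \<and>
        (\<forall>d<k. \<sigma> d > 0) \<and>
        (\<forall>d<k. \<forall>d'<k. (\<Sum>r\<in>Rs. u d r * u d' r) = (if d = d' then 1 else 0)) \<and>
        (\<forall>d<k. \<forall>d'<k. (\<Sum>c\<in>Cs. v d c * v d' c) = (if d = d' then 1 else 0)) \<and>
        (\<forall>r\<in>Rs. \<forall>c\<in>Cs. A r c = (\<Sum>d<k. \<sigma> d * u d r * v d c)))"

definition singular_values :: "'r set \<Rightarrow> 'c set \<Rightarrow> ('r \<Rightarrow> 'c \<Rightarrow> real) \<Rightarrow> real multiset" where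
  "singular_values Rs Cs A =
     (let S = (THE S. svd_pos Rs Cs A S)
      in S + replicate_mset (min (card Rs) (card Cs) - size S) 0)"

definition QE_mat :: "'r set \<Rightarrow> 'c set \<Rightarrow> ('r \<Rightarrow> 'c \<Rightarrow> real) \<Rightarrow> real" where
  "QE_mat Rs Cs A =
     (let S = singular_values Rs Cs A; t = (\<Sum>s\<in>#S. s\<^sup>2)
      in if t = 0 then 0
         else - (\<Sum>s\<in>#S. (if s = 0 then 0 else (s\<^sup>2 / t) * ln (s\<^sup>2 / t))))"

text \<open>Tensor of order K with axis dimensions D 0, ..., D (K-1) (axes 0-based, i.e. axis n
  here is axis n+1 of the paper): a real function on multi-indices.\<close>

definition tidx :: "nat \<Rightarrow> (nat \<Rightarrow> nat) \<Rightarrow> (nat \<Rightarrow> nat) set" where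
  "tidx K D = PiE {0..<K} (\<lambda>n. {0..<D n})"

definition tnorm :: "nat \<Rightarrow> (nat \<Rightarrow> nat) \<Rightarrow> ((nat \<Rightarrow> nat) \<Rightarrow> real) \<Rightarrow> real" where
  "tnorm K D A = sqrt (\<Sum>i\<in>tidx K D. (A i)\<^sup>2)"

definition mat_rows :: "nat \<Rightarrow> (nat \<Rightarrow> nat) \<Rightarrow> nat set \<Rightarrow> (nat \<Rightarrow> nat) set" where
  "mat_rows K D J = PiE J (\<lambda>n. {0..<D n})"

definition mat_cols :: "nat \<Rightarrow> (nat \<Rightarrow> nat) \<Rightarrow> nat set \<Rightarrow> (nat \<Rightarrow> nat) set" where
  "mat_cols K D J = PiE ({0..<K} - J) (\<lambda>n. {0..<D n})"

definition mat_arr :: "nat set \<Rightarrow> ((nat \<Rightarrow> nat) \<Rightarrow> real) \<Rightarrow> (nat \<Rightarrow> nat) \<Rightarrow> (nat \<Rightarrow> nat) \<Rightarrow> real" where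
  "mat_arr J A = (\<lambda>r c. A (\<lambda>n. if n \<in> J then r n else c n))"

definition QE :: "nat \<Rightarrow> (nat \<Rightarrow> nat) \<Rightarrow> ((nat \<Rightarrow> nat) \<Rightarrow> real) \<Rightarrow> nat set \<Rightarrow> real" where
  "QE K D A J = QE_mat (mat_rows K D J) (mat_cols K D J) (mat_arr J A)"

definition DJ :: "nat \<Rightarrow> (nat \<Rightarrow> nat) \<Rightarrow> nat set \<Rightarrow> nat" where
  "DJ K D J = min (\<Prod>n\<in>J. D n) (\<Prod>n\<in>{0..<K} - J. D n)"

text \<open>Multi-indices [N]^P (0-based), and a data point: x :: multi-index => vector, y :: real.\<close>
definition grid :: "nat \<Rightarrow> nat \<Rightarrow> (nat \<Rightarrow> nat) set" where
  "grid N P = PiE {0..<P} (\<lambda>_. {0..<N})"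

definition data_tensor ::
  "nat \<Rightarrow> nat \<Rightarrow> ((nat \<Rightarrow> nat) \<Rightarrow> nat) \<Rightarrow> ((nat \<Rightarrow> nat) \<Rightarrow> nat \<Rightarrow> real) \<times> real
     \<Rightarrow> (nat \<Rightarrow> nat) \<Rightarrow> real" where
  "data_tensor N P \<mu> z = (\<lambda>i. snd z * (\<Prod>n<N ^ P. fst z (the_inv_into (grid N P) \<mu> n) (i n)))"

definition D_pop ::
  "nat \<Rightarrow> nat \<Rightarrow> ((nat \<Rightarrow> nat) \<Rightarrow> nat) \<Rightarrow> (((nat \<Rightarrow> nat) \<Rightarrow> nat \<Rightarrow> real) \<times> real) measure
     \<Rightarrow> (nat \<Rightarrow> nat) \<Rightarrow> real" where
  "D_pop N P \<mu> Dist = (\<lambda>i. \<integral>z. data_tensor N P \<mu> z i \<partial>Dist)"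

definition D_emp ::
  "nat \<Rightarrow> nat \<Rightarrow> ((nat \<Rightarrow> nat) \<Rightarrow> nat) \<Rightarrow> nat \<Rightarrow> (nat \<Rightarrow> ((nat \<Rightarrow> nat) \<Rightarrow> nat \<Rightarrow> real) \<times> real)
     \<Rightarrow> (nat \<Rightarrow> nat) \<Rightarrow> real" where
  "D_emp N P \<mu> M \<omega> = (\<lambda>i. (1 / real M) * (\<Sum>m<M. data_tensor N P \<mu> (\<omega> m) i))"

end

theory Submission
  imports Defs "HOL-Combinatorics.List_Permutation"
begin

definition ipr :: "'a set \<Rightarrow> ('a \<Rightarrow> real) \<Rightarrow> ('a \<Rightarrow> real) \<Rightarrow> real" where
  "ipr R x y = (\<Sum>r\<in>R. x r * y r)"

definition orthon :: "'a set \<Rightarrow> nat \<Rightarrow> (nat \<Rightarrow> 'a \<Rightarrow> real) \<Rightarrow> bool" where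
  "orthon R k u \<longleftrightarrow> (\<forall>d<k. \<forall>d'<k. ipr R (u d) (u d') = (if d = d' then 1 else 0))"

definition is_svd :: "'r set \<Rightarrow> 'c set \<Rightarrow> ('r \<Rightarrow> 'c \<Rightarrow> real) \<Rightarrow> nat \<Rightarrow> (nat \<Rightarrow> real)
   \<Rightarrow> (nat \<Rightarrow> 'r \<Rightarrow> real) \<Rightarrow> (nat \<Rightarrow> 'c \<Rightarrow> real) \<Rightarrow> bool" where
  "is_svd Rs Cs A k \<sigma> u v \<longleftrightarrow> (\<forall>d<k. \<sigma> d > 0) \<and> orthon Rs k u \<and> orthon Cs k v \<and>
     (\<forall>r\<in>Rs. \<forall>c\<in>Cs. A r c = (\<Sum>d<k. \<sigma> d * u d r * v d c))"

lemma svd_pos_iff: "svd_pos Rs Cs A S \<longleftrightarrow> (\<exists>k \<sigma> u v. S = mset (map \<sigma> [0..<k]) \<and> is_svd Rs Cs A k \<sigma> u v)"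
  unfolding svd_pos_def is_svd_def orthon_def ipr_def by auto

lemma ipr_sym: "ipr R x y = ipr R y x"
  unfolding ipr_def by (simp add: mult.commute)

lemma ipr_self_nonneg: "ipr R x x \<ge> 0"
  unfolding ipr_def by (auto intro: sum_nonneg)

lemma ipr_lin_sum:
  "ipr R w (\<lambda>r. \<Sum>j<k. a j * x j r) = (\<Sum>j<k. a j * ipr R w (x j))"
  unfolding ipr_def by (simp add: sum_distrib_left sum.swap[of _ R] mult_ac)

lemma ipr_sum_lin:
  "ipr R (\<lambda>r. \<Sum>j<k. a j * x j r) w = (\<Sum>j<k. a j * ipr R (x j) w)"
  using ipr_lin_sum[where R=R and w=w and k=k and a=a and x=x] by (simp add: ipr_sym)

lemma ipr_orthon_sum:
  assumes "orthon R k x"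
  shows "ipr R (\<lambda>r. \<Sum>j<k. a j * x j r) (\<lambda>r. \<Sum>j<k. b j * x j r) = (\<Sum>j<k. a j * b j)"
proof -
  have "ipr R (\<lambda>r. \<Sum>j<k. a j * x j r) (\<lambda>r. \<Sum>j<k. b j * x j r)
     = (\<Sum>j<k. a j * (\<Sum>i<k. b i * ipr R (x j) (x i)))"
    by (simp add: ipr_sum_lin ipr_lin_sum)
  also have "\<dots> = (\<Sum>j<k. a j * b j)"
  proof (rule sum.cong)
    fix j assume j: "j \<in> {..<k}"
    have "(\<Sum>i<k. b i * ipr R (x j) (x i)) = (\<Sum>i<k. if i = j then b j else 0)"
      by (rule sum.cong) (use assms j in \<open>auto simp: orthon_def\<close>)
    then show "a j * (\<Sum>i<k. b i * ipr R (x j) (x i)) = a j * b j" using j by simp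
  qed simp
  finally show ?thesis .
qed

lemma bessel:
  assumes "orthon R k x"
  shows "(\<Sum>j<k. (ipr R w (x j))\<^sup>2) \<le> ipr R w w"
proof -
  define a where "a j = ipr R w (x j)" for j
  define p where "p = (\<lambda>r. \<Sum>j<k. a j * x j r)"
  have 1: "ipr R w p = (\<Sum>j<k. (a j)\<^sup>2)"
    unfolding p_def ipr_lin_sum by (simp add: a_def power2_eq_square)
  have 2: "ipr R p p = (\<Sum>j<k. (a j)\<^sup>2)"
    unfolding p_def using ipr_orthon_sum[OF assms, of a a] by (simp add: power2_eq_square)
  have "0 \<le> ipr R (\<lambda>r. w r - p r) (\<lambda>r. w r - p r)" by (rule ipr_self_nonneg)
  also have "\<dots> = ipr R w w - 2 * ipr R w p + ipr R p p"
    unfolding ipr_def by (simp add: algebra_simps sum_subtractf sum.distrib sum_distrib_left)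
  finally show ?thesis using 1 2 by (simp add: a_def)
qed

lemma sum_indic:
  fixes y :: "'a \<Rightarrow> real"
  assumes "finite R" "r \<in> R"
  shows "(\<Sum>ra\<in>R. (if ra = r then 1 else 0) * y ra) = y r"
proof -
  have "(\<Sum>ra\<in>R. (if ra = r then 1 else 0) * y ra) = (\<Sum>ra\<in>R. if ra = r then y ra else 0)"
    by (rule sum.cong) auto
  then show ?thesis using assms by simp
qed

lemma orthon_card:
  assumes "finite R" "orthon R k x"
  shows "k \<le> card R"
proof -
  have "real k = (\<Sum>j<k. ipr R (x j) (x j))"
    using assms(2) by (simp add: orthon_def)
  also have "\<dots> = (\<Sum>r\<in>R. \<Sum>j<k. (ipr R (\<lambda>r'. if r' = r then 1 else 0) (x j))\<^sup>2)"
  proof -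
    have "\<And>j r. r \<in> R \<Longrightarrow> ipr R (\<lambda>r'. if r' = r then 1 else 0) (x j) = x j r"
      unfolding ipr_def using assms(1) by (simp add: sum_indic)
    then show ?thesis unfolding ipr_def[of R "x _" "x _"]
      by (simp add: sum.swap[of _ R] power2_eq_square)
  qed
  also have "\<dots> \<le> (\<Sum>r\<in>R. ipr R (\<lambda>r'. if r' = r then 1 else 0) (\<lambda>r'. if r' = r then 1 else 0))"
    by (rule sum_mono) (rule bessel[OF assms(2)])
  also have "\<dots> = (\<Sum>r\<in>R. 1)"
    by (rule sum.cong) (use assms(1) in \<open>auto simp: ipr_def if_distrib cong: if_cong\<close>)
  finally show ?thesis by simp
qed

definition Av :: "'c set \<Rightarrow> ('r \<Rightarrow> 'c \<Rightarrow> real) \<Rightarrow> ('c \<Rightarrow> real) \<Rightarrow> 'r \<Rightarrow> real" where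
  "Av C A w = (\<lambda>r. \<Sum>c\<in>C. A r c * w c)"

lemma Av_lin: "Av C A (\<lambda>c. a * x c + b * y c) = (\<lambda>r. a * Av C A x r + b * Av C A y r)"
  unfolding Av_def by (simp add: algebra_simps sum.distrib sum_distrib_left)

lemma Av_scale: "Av C A (\<lambda>c. a * x c) = (\<lambda>r. a * Av C A x r)"
  unfolding Av_def by (simp add: algebra_simps sum_distrib_left)

lemma ipr_lin2:
  "ipr R (\<lambda>r. a * x r + b * y r) (\<lambda>r. a * x r + b * y r)
     = a\<^sup>2 * ipr R x x + 2 * a * b * ipr R x y + b\<^sup>2 * ipr R y y"
  unfolding ipr_def by (simp add: algebra_simps sum.distrib sum_distrib_left power2_eq_square)

lemma ipr_scale2: "ipr R (\<lambda>r. a * x r) (\<lambda>r. a * x r) = a\<^sup>2 * ipr R x x"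
  unfolding ipr_def by (simp add: algebra_simps sum_distrib_left power2_eq_square)

lemma quad_zero:
  fixes b Q :: real
  assumes "\<And>t. 2 * t * b \<le> t\<^sup>2 * Q"
  shows "b = 0"
proof (rule ccontr)
  assume "b \<noteq> 0"
  define t where "t = b / (\<bar>Q\<bar> + 1)"
  have pos: "\<bar>Q\<bar> + 1 > 0" by simp
  have "2 * t * b \<le> t\<^sup>2 * Q" by (rule assms)
  then have "2 * b\<^sup>2 / (\<bar>Q\<bar> + 1) \<le> b\<^sup>2 * Q / (\<bar>Q\<bar> + 1)\<^sup>2"
    by (simp add: t_def power2_eq_square power_divide)
  then have "(2 * b\<^sup>2 / (\<bar>Q\<bar> + 1)) * (\<bar>Q\<bar> + 1)\<^sup>2 \<le> (b\<^sup>2 * Q / (\<bar>Q\<bar> + 1)\<^sup>2) * (\<bar>Q\<bar> + 1)\<^sup>2"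
    by (rule mult_right_mono) simp
  moreover have "(2 * b\<^sup>2 / (\<bar>Q\<bar> + 1)) * (\<bar>Q\<bar> + 1)\<^sup>2 = 2 * b\<^sup>2 * (\<bar>Q\<bar> + 1)"
    using pos unfolding power2_eq_square[of "\<bar>Q\<bar> + 1"] by (simp add: field_simps)
  moreover have "(b\<^sup>2 * Q / (\<bar>Q\<bar> + 1)\<^sup>2) * (\<bar>Q\<bar> + 1)\<^sup>2 = b\<^sup>2 * Q"
    using pos by simp
  ultimately have "2 * b\<^sup>2 * (\<bar>Q\<bar> + 1) \<le> b\<^sup>2 * Q" by simp
  moreover have "b\<^sup>2 * Q \<le> b\<^sup>2 * \<bar>Q\<bar>" by (simp add: mult_left_mono)
  moreover have "b\<^sup>2 > 0" using \<open>b \<noteq> 0\<close> by simp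
  ultimately have h: "2 * b\<^sup>2 * (\<bar>Q\<bar> + 1) \<le> b\<^sup>2 * \<bar>Q\<bar>" by linarith
  define q where "q = \<bar>Q\<bar>"
  define B where "B = b\<^sup>2"
  have h': "2 * B * (q + 1) \<le> B * q" using h by (simp add: q_def B_def)
  have "B > 0" "q \<ge> 0" using \<open>b\<^sup>2 > 0\<close> by (simp_all add: B_def q_def)
  then have "B * q \<ge> 0" by simp
  moreover have "2 * B * (q + 1) = 2 * (B * q) + 2 * B" by (simp add: algebra_simps)
  ultimately show False using h' \<open>B > 0\<close> by linarith
qed

lemma ipr_zero_iff:
  assumes "finite R"
  shows "ipr R x x = 0 \<longleftrightarrow> (\<forall>r\<in>R. x r = 0)"
  unfolding ipr_def using assms by (simp add: sum_nonneg_eq_0_iff)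

lemma cont_coord [continuous_intros]: "continuous_on S (\<lambda>w::'a \<Rightarrow> real. w c)"
  by (rule continuous_on_subset[OF continuous_on_product_coordinates]) simp

definition fbox :: "'c set \<Rightarrow> ('c \<Rightarrow> real) set" where
  "fbox C = PiE UNIV (\<lambda>c. if c \<in> C then {-1..1} else {0})"

lemma compact_fbox: "compact (fbox C)"
proof -
  have "compactin (product_topology (\<lambda>i. euclidean) UNIV) (fbox C)"
    unfolding fbox_def compactin_PiE by auto
  then show ?thesis
    by (simp add: euclidean_product_topology compactin_euclidean_iff)
qed

lemma ipr_restrict1: "ipr C (\<lambda>c. if c \<in> C then f c else 0) y = ipr C f y"
  unfolding ipr_def by (rule sum.cong) auto

lemma ipr_restrict2: "ipr C y (\<lambda>c. if c \<in> C then f c else 0) = ipr C y f"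
  unfolding ipr_def by (rule sum.cong) auto

lemma Av_restrict: "Av C A (\<lambda>c. if c \<in> C then f c else 0) = Av C A f"
  unfolding Av_def by (rule ext, rule sum.cong) auto

lemma sq_le_ipr:
  assumes "finite C" "c \<in> C"
  shows "(w c)\<^sup>2 \<le> ipr C w w"
proof -
  have "(w c)\<^sup>2 = (\<Sum>c'\<in>{c}. w c' * w c')" by (simp add: power2_eq_square)
  also have "\<dots> \<le> ipr C w w" unfolding ipr_def
    by (rule sum_mono2) (use assms in auto)
  finally show ?thesis .
qed

lemma in_box:
  assumes "finite C" "\<And>c. c \<notin> C \<Longrightarrow> w c = 0" "ipr C w w = 1"
  shows "w \<in> fbox C"
proof -
  have "\<bar>w c\<bar> \<le> 1" if "c \<in> C" for c
  proof -
    have "(w c)\<^sup>2 \<le> 1" using sq_le_ipr[OF assms(1) that, of w] assms(3) by simp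
    then show ?thesis by (simp add: abs_square_le_1)
  qed
  then show ?thesis unfolding fbox_def using assms(2) by (auto simp: PiE_iff abs_le_iff)
qed

lemma box_out: "w \<in> fbox C \<Longrightarrow> c \<notin> C \<Longrightarrow> w c = 0"
  unfolding fbox_def by (auto simp: PiE_iff dest: spec[of _ c])

definition G :: "'r set \<Rightarrow> 'c set \<Rightarrow> ('r \<Rightarrow> 'c \<Rightarrow> real) \<Rightarrow> nat \<Rightarrow> (nat \<Rightarrow> 'c \<Rightarrow> real) \<Rightarrow> bool" where
  "G R C A k v \<longleftrightarrow> orthon C k v \<and> (\<forall>d<k. ipr R (Av C A (v d)) (Av C A (v d)) > 0) \<and>
     (\<forall>d<k. \<forall>w. (\<forall>d'\<le>d. ipr C w (v d') = 0) \<longrightarrow> ipr R (Av C A (v d)) (Av C A w) = 0)"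

lemma G_ext:
  assumes fin: "finite R" "finite C" and G: "G R C A k v"
    and w0: "\<forall>d<k. ipr C w0 (v d) = 0" "ipr R (Av C A w0) (Av C A w0) > 0"
  shows "\<exists>m. G R C A (Suc k) (v(k := m))"
proof -
  define F where "F w = ipr R (Av C A w) (Av C A w)" for w
  define K where "K = {w \<in> fbox C. ipr C w w = 1 \<and> (\<forall>d<k. ipr C w (v d) = 0)}"
  have contF: "continuous_on S F" for S
    unfolding F_def ipr_def Av_def by (intro continuous_intros)
  have "compact K"
  proof -
    have "K = fbox C \<inter> ({w. ipr C w w = 1} \<inter> (\<Inter>d\<in>{..<k}. {w. ipr C w (v d) = 0}))"
      unfolding K_def by auto
    moreover have "closed ({w. ipr C w w = 1} \<inter> (\<Inter>d\<in>{..<k}. {w. ipr C w (v d) = 0}))"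
      unfolding ipr_def
      by (intro closed_Int closed_INT ballI closed_Collect_eq continuous_intros)
    ultimately show ?thesis using compact_Int_closed[OF compact_fbox] by simp
  qed
  define n0 where "n0 = ipr C w0 w0"
  have "n0 > 0"
  proof (rule ccontr)
    assume "\<not> n0 > 0"
    then have "n0 = 0" using ipr_self_nonneg[of C w0] by (simp add: n0_def)
    then have "\<forall>c\<in>C. w0 c = 0" using ipr_zero_iff[OF fin(2)] by (simp add: n0_def)
    then have "Av C A w0 = (\<lambda>r. 0)" unfolding Av_def by auto
    then show False using w0(2) by (simp add: ipr_def)
  qed
  define w1 where "w1 = (\<lambda>c. if c \<in> C then (1 / sqrt n0) * w0 c else 0)"
  have w1n: "ipr C w1 w1 = 1"
    unfolding w1_def ipr_restrict1 ipr_restrict2 ipr_scale2 using \<open>n0 > 0\<close>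
    by (simp add: n0_def power_divide)
  have "w1 \<in> K"
  proof -
    have "w1 \<in> fbox C" by (rule in_box[OF fin(2) _ w1n]) (simp add: w1_def)
    moreover have "ipr C w1 (v d) = 0" if "d < k" for d
      unfolding w1_def ipr_restrict1 using w0(1) that by (simp add: ipr_def sum_divide_distrib[symmetric])
    ultimately show ?thesis using w1n by (simp add: K_def)
  qed
  then have "K \<noteq> {}" by auto
  obtain m where mK: "m \<in> K" and mmax: "\<And>y. y \<in> K \<Longrightarrow> F y \<le> F m"
    using continuous_attains_sup[OF \<open>compact K\<close> \<open>K \<noteq> {}\<close> contF] by blast
  have "F w1 = (1 / sqrt n0)\<^sup>2 * F w0"
    unfolding F_def w1_def Av_restrict Av_scale ipr_scale2 by simp
  then have "F w1 > 0" using \<open>n0 > 0\<close> w0(2) by (simp add: F_def)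
  then have Fm: "F m > 0" using mmax[OF \<open>w1 \<in> K\<close>] by simp
  have m1: "ipr C m m = 1" and morth: "\<forall>d<k. ipr C m (v d) = 0" and mbox: "m \<in> fbox C"
    using mK by (auto simp: K_def)
  define v' where "v' = v(k := m)"
  have orth: "orthon C (Suc k) v'"
    unfolding orthon_def
  proof (intro allI impI)
    fix d d' assume "d < Suc k" "d' < Suc k"
    then consider "d < k" "d' < k" | "d = k" "d' < k" | "d < k" "d' = k" | "d = k" "d' = k"
      by linarith
    then show "ipr C (v' d) (v' d') = (if d = d' then 1 else 0)"
    proof cases
      case 1 then show ?thesis using G by (simp add: v'_def G_def orthon_def)
    next
      case 2 then show ?thesis using morth by (simp add: v'_def)
    next
      case 3 then show ?thesis using morth by (simp add: v'_def ipr_sym)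
    next
      case 4 then show ?thesis using m1 by (simp add: v'_def)
    qed
  qed
  have first_order: "ipr R (Av C A m) (Av C A w) = 0" if hw: "\<forall>d'\<le>k. ipr C w (v' d') = 0" for w
  proof -
    define w' where "w' = (\<lambda>c. if c \<in> C then w c else 0)"
    have Aw': "Av C A w' = Av C A w" unfolding w'_def Av_restrict ..
    have w'v: "ipr C w' (v d) = 0" if "d < k" for d
      using hw that unfolding w'_def ipr_restrict1 by (auto simp: v'_def dest: spec[of _ d])
    have w'm: "ipr C m w' = 0"
      using hw unfolding w'_def ipr_restrict2 by (auto simp: v'_def ipr_sym dest: spec[of _ k])
    define n where "n = ipr C w' w'"
    have n0: "n \<ge> 0" unfolding n_def by (rule ipr_self_nonneg)
    define b where "b = ipr R (Av C A m) (Av C A w')"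
    have key: "2 * t * b \<le> t\<^sup>2 * (F m * n - F w')" for t
    proof -
      define s where "s = 1 + t\<^sup>2 * n"
      have s0: "s > 0" unfolding s_def using n0 by (simp add: add_pos_nonneg)
      define z where "z = (\<lambda>c. (1 / sqrt s) * (1 * m c + t * w' c))"
      have nz: "ipr C (\<lambda>c. 1 * m c + t * w' c) (\<lambda>c. 1 * m c + t * w' c) = s"
        unfolding ipr_lin2 using m1 w'm by (simp add: s_def n_def)
      have z1: "ipr C z z = 1"
        unfolding z_def ipr_scale2 nz using s0 by (simp add: power_divide)
      have "z \<in> fbox C"
      proof (rule in_box[OF fin(2) _ z1])
        fix c assume "c \<notin> C"
        then show "z c = 0" using box_out[OF mbox] by (simp add: z_def w'_def)
      qed
      moreover have "ipr C z (v d) = 0" if "d < k" for d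
      proof -
        have "ipr C z (v d) = (1 / sqrt s) * (ipr C m (v d) + t * ipr C w' (v d))"
          unfolding z_def ipr_def by (simp add: algebra_simps sum.distrib sum_distrib_left)
        then show ?thesis using morth w'v that by simp
      qed
      ultimately have "z \<in> K" using z1 by (simp add: K_def)
      then have "F z \<le> F m" by (rule mmax)
      moreover have "F z = (1 / sqrt s)\<^sup>2 * (F m + 2 * t * b + t\<^sup>2 * F w')"
        unfolding F_def z_def Av_scale ipr_scale2 Av_lin ipr_lin2 b_def by simp
      ultimately have "(1 / s) * (F m + 2 * t * b + t\<^sup>2 * F w') \<le> F m"
        using s0 by (simp add: power_divide)
      then have "F m + 2 * t * b + t\<^sup>2 * F w' \<le> F m * s"
        using s0 by (simp add: field_simps)
      then show ?thesis by (simp add: s_def algebra_simps)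
    qed
    have "b = 0" by (rule quad_zero[OF key])
    then show ?thesis using Aw' by (simp add: b_def)
  qed
  have "G R C A (Suc k) v'"
    unfolding G_def
  proof (intro conjI allI impI)
    show "orthon C (Suc k) v'" by (rule orth)
  next
    fix d assume "d < Suc k"
    then show "ipr R (Av C A (v' d)) (Av C A (v' d)) > 0"
      using G Fm by (cases "d = k") (auto simp: G_def v'_def F_def)
  next
    fix d w assume d: "d < Suc k" and hw: "\<forall>d'\<le>d. ipr C w (v' d') = 0"
    show "ipr R (Av C A (v' d)) (Av C A w) = 0"
    proof (cases "d = k")
      case True then show ?thesis using first_order hw by (simp add: v'_def)
    next
      case False
      then have "d < k" using d by simp
      moreover have "\<forall>d'\<le>d. ipr C w (v d') = 0" using hw \<open>d < k\<close> by (auto simp: v'_def)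
      ultimately show ?thesis using G False by (simp add: G_def v'_def)
    qed
  qed
  then show ?thesis unfolding v'_def by blast
qed

lemma G_orth_pair:
  assumes "G R C A k v" "d < k" "d' < k" "d \<noteq> d'"
  shows "ipr R (Av C A (v d)) (Av C A (v d')) = 0"
proof -
  have *: "ipr R (Av C A (v a)) (Av C A (v b)) = 0" if "a < b" "b < k" for a b
  proof -
    have "\<forall>d''\<le>a. ipr C (v b) (v d'') = 0"
      using assms(1) that by (auto simp: G_def orthon_def)
    then show ?thesis using assms(1) that by (simp add: G_def)
  qed
  show ?thesis
  proof (cases "d < d'")
    case True then show ?thesis using * assms by simp
  next
    case False then have "d' < d" using assms(4) by simp
    then show ?thesis using *[of d' d] assms by (simp add: ipr_sym)
  qed
qed

lemma svd_exists:
  assumes fin: "finite R" "finite C"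
  shows "\<exists>k \<sigma> u v. is_svd R C A k \<sigma> u v"
proof -
  define S where "S = {k. \<exists>v. G R C A k v}"
  have Sb: "S \<subseteq> {..card C}"
    unfolding S_def G_def using orthon_card[OF fin(2)] by auto
  then have "finite S" by (rule finite_subset) simp
  have "0 \<in> S" unfolding S_def G_def orthon_def by simp
  define k where "k = Max S"
  have "k \<in> S" unfolding k_def using \<open>finite S\<close> \<open>0 \<in> S\<close> by (intro Max_in) auto
  then obtain v where G: "G R C A k v" unfolding S_def by auto
  have maxk: "ipr R (Av C A w) (Av C A w) = 0" if hw: "\<forall>d<k. ipr C w (v d) = 0" for w
  proof (rule ccontr)
    assume "ipr R (Av C A w) (Av C A w) \<noteq> 0"
    then have "ipr R (Av C A w) (Av C A w) > 0" using ipr_self_nonneg[of R "Av C A w"] by simp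
    then obtain m where "G R C A (Suc k) (v(k := m))" using G_ext[OF fin G hw] by blast
    then have "Suc k \<in> S" unfolding S_def by blast
    then have "Suc k \<le> k" unfolding k_def using \<open>finite S\<close> by (simp add: Max_ge)
    then show False by simp
  qed
  define \<sigma> where "\<sigma> d = sqrt (ipr R (Av C A (v d)) (Av C A (v d)))" for d
  define u where "u d = (\<lambda>r. Av C A (v d) r / \<sigma> d)" for d
  have \<sigma>pos: "\<sigma> d > 0" if "d < k" for d
    using G that by (simp add: G_def \<sigma>_def)
  have "orthon R k u"
    unfolding orthon_def
  proof (intro allI impI)
    fix d d' assume d: "d < k" "d' < k"
    show "ipr R (u d) (u d') = (if d = d' then 1 else 0)"
    proof (cases "d = d'")
      case True
      have "ipr R (u d) (u d) = ipr R (Av C A (v d)) (Av C A (v d)) / (\<sigma> d)\<^sup>2"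
        unfolding u_def ipr_def by (simp add: sum_divide_distrib power2_eq_square)
      also have "\<dots> = 1"
      proof -
        have "ipr R (Av C A (v d)) (Av C A (v d)) > 0" using G d(1) by (simp add: G_def)
        then show ?thesis by (simp add: \<sigma>_def)
      qed
      finally show ?thesis using True by simp
    next
      case False
      have "ipr R (u d) (u d') = ipr R (Av C A (v d)) (Av C A (v d')) / (\<sigma> d * \<sigma> d')"
        unfolding u_def ipr_def by (simp add: sum_divide_distrib)
      then show ?thesis using G_orth_pair[OF G d False] False by simp
    qed
  qed
  moreover have "orthon C k v" using G by (simp add: G_def)
  moreover have "A r c = (\<Sum>d<k. \<sigma> d * u d r * v d c)" if rc: "r \<in> R" "c \<in> C" for r c
  proof -
    define w where "w = (\<lambda>c'. (if c' = c then 1 else 0) - (\<Sum>d<k. v d c * v d c'))"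
    have "ipr C w (v d') = 0" if "d' < k" for d'
    proof -
      have "ipr C w (v d') = ipr C (\<lambda>c'. if c' = c then 1 else 0) (v d') - (\<Sum>d<k. v d c * ipr C (v d) (v d'))"
        unfolding w_def ipr_def by (simp add: algebra_simps sum_subtractf sum_distrib_left sum.swap[of _ C])
      also have "ipr C (\<lambda>c'. if c' = c then 1 else 0) (v d') = v d' c"
        unfolding ipr_def using sum_indic[OF fin(2) rc(2)] .
      also have "(\<Sum>d<k. v d c * ipr C (v d) (v d')) = (\<Sum>d<k. if d = d' then v d' c else 0)"
        by (rule sum.cong) (use G that in \<open>auto simp: G_def orthon_def\<close>)
      also have "\<dots> = v d' c" using that by simp
      finally show ?thesis by simp
    qed
    then have "ipr R (Av C A w) (Av C A w) = 0" using maxk by blast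
    then have "Av C A w r = 0" using ipr_zero_iff[OF fin(1)] rc(1) by blast
    moreover have "Av C A w r = A r c - (\<Sum>d<k. v d c * Av C A (v d) r)"
    proof -
      have "Av C A w r = (\<Sum>c'\<in>C. A r c' * (if c' = c then 1 else 0)) - (\<Sum>d<k. v d c * Av C A (v d) r)"
        unfolding w_def Av_def by (simp add: algebra_simps sum_subtractf sum_distrib_left sum.swap[of _ C])
      also have "(\<Sum>c'\<in>C. A r c' * (if c' = c then 1 else 0)) = A r c"
        using sum_indic[OF fin(2) rc(2), of "A r"] by (simp add: mult.commute)
      finally show ?thesis .
    qed
    moreover have "\<sigma> d * u d r = Av C A (v d) r" if "d < k" for d
      using \<sigma>pos[OF that] by (simp add: u_def)
    ultimately show ?thesis by (simp add: mult.commute)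
  qed
  ultimately have "is_svd R C A k \<sigma> u v" using \<sigma>pos by (simp add: is_svd_def)
  then show ?thesis by blast
qed

definition dec :: "nat \<Rightarrow> (nat \<Rightarrow> real) \<Rightarrow> bool" where
  "dec n f \<longleftrightarrow> (\<forall>i j. i \<le> j \<longrightarrow> j < n \<longrightarrow> f j \<le> f i)"

definition pad :: "nat \<Rightarrow> (nat \<Rightarrow> real) \<Rightarrow> nat \<Rightarrow> real" where
  "pad k f i = (if i < k then f i else 0)"

definition finner :: "'r set \<Rightarrow> 'c set \<Rightarrow> ('r \<Rightarrow> 'c \<Rightarrow> real) \<Rightarrow> ('r \<Rightarrow> 'c \<Rightarrow> real) \<Rightarrow> real" where
  "finner R C A B = (\<Sum>r\<in>R. \<Sum>c\<in>C. A r c * B r c)"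

lemma svd_permute:
  assumes "is_svd R C A k \<sigma> u v" "p permutes {..<k}"
  shows "is_svd R C A k (\<sigma> \<circ> p) (\<lambda>d. u (p d)) (\<lambda>d. v (p d))"
    and "mset (map (\<sigma> \<circ> p) [0..<k]) = mset (map \<sigma> [0..<k])"
proof -
  have pk: "p d < k" if "d < k" for d using permutes_in_image[OF assms(2), of d] that by simp
  have pinj: "p d = p d' \<longleftrightarrow> d = d'" for d d' using assms(2) by (metis permutes_inj injD)
  show "is_svd R C A k (\<sigma> \<circ> p) (\<lambda>d. u (p d)) (\<lambda>d. v (p d))"
    unfolding is_svd_def
  proof (intro conjI ballI)
    show "\<forall>d<k. 0 < (\<sigma> \<circ> p) d" using assms(1) pk by (simp add: is_svd_def)
    show "orthon R k (\<lambda>d. u (p d))" using assms(1) pk pinj by (simp add: is_svd_def orthon_def)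
    show "orthon C k (\<lambda>d. v (p d))" using assms(1) pk pinj by (simp add: is_svd_def orthon_def)
    fix r c assume "r \<in> R" "c \<in> C"
    then have "A r c = (\<Sum>d<k. \<sigma> d * u d r * v d c)" using assms(1) by (simp add: is_svd_def)
    also have "\<dots> = (\<Sum>d<k. \<sigma> (p d) * u (p d) r * v (p d) c)"
      using sum.permute[OF assms(2), of "\<lambda>d. \<sigma> d * u d r * v d c"] by (simp add: comp_def)
    finally show "A r c = (\<Sum>d<k. (\<sigma> \<circ> p) d * u (p d) r * v (p d) c)" by simp
  qed
  have "map (\<sigma> \<circ> p) [0..<k] = permute_list p (map \<sigma> [0..<k])"
    unfolding permute_list_def by (auto intro: nth_equalityI simp: pk)
  then show "mset (map (\<sigma> \<circ> p) [0..<k]) = mset (map \<sigma> [0..<k])"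
    using assms(2) by simp
qed

lemma sort_perm:
  fixes \<sigma> :: "nat \<Rightarrow> real"
  obtains p where "p permutes {..<k}" "dec k (\<sigma> \<circ> p)"
proof -
  define xs where "xs = map \<sigma> [0..<k]"
  define ys where "ys = rev (sort xs)"
  have "mset ys = mset xs" by (simp add: ys_def)
  then obtain p where p: "p permutes {..<length xs}" "permute_list p xs = ys"
    using mset_eq_permutation by metis
  have lx: "length xs = k" by (simp add: xs_def)
  have pk: "p d < k" if "d < k" for d using permutes_in_image[OF p(1), of d] that lx by simp
  have ysn: "ys ! i = \<sigma> (p i)" if "i < k" for i
    using p(2)[symmetric] that pk lx by (simp add: permute_list_def xs_def)
  have "dec k (\<sigma> \<circ> p)"
    unfolding dec_def
  proof (intro allI impI)
    fix i j assume ij: "i \<le> j" "j < k"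
    have ls: "length (sort xs) = k" using lx by simp
    have "sort xs ! (k - Suc j) \<le> sort xs ! (k - Suc i)"
      by (rule sorted_nth_mono) (use ij ls in auto)
    then have "ys ! j \<le> ys ! i" unfolding ys_def using ij ls by (simp add: rev_nth)
    then show "(\<sigma> \<circ> p) j \<le> (\<sigma> \<circ> p) i" using ysn ij by simp
  qed
  then show ?thesis using that p(1) lx by simp
qed

lemma svd_sorted_exists:
  assumes "is_svd R C A k \<sigma> u v"
  shows "\<exists>\<sigma>' u' v'. is_svd R C A k \<sigma>' u' v' \<and> dec k \<sigma>' \<and> mset (map \<sigma>' [0..<k]) = mset (map \<sigma> [0..<k])"
proof -
  obtain p where "p permutes {..<k}" "dec k (\<sigma> \<circ> p)" using sort_perm by blast
  then show ?thesis using svd_permute[OF assms] by blast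
qed

lemma sum4_swap:
  "(\<Sum>r\<in>R. \<Sum>c\<in>C. \<Sum>i\<in>I. \<Sum>j\<in>J. f r c i j) = (\<Sum>i\<in>I. \<Sum>j\<in>J. \<Sum>r\<in>R. \<Sum>c\<in>C. f r c i j)"
proof -
  have "(\<Sum>r\<in>R. \<Sum>c\<in>C. \<Sum>i\<in>I. \<Sum>j\<in>J. f r c i j) = (\<Sum>r\<in>R. \<Sum>i\<in>I. \<Sum>c\<in>C. \<Sum>j\<in>J. f r c i j)"
    by (rule sum.cong[OF refl], rule sum.swap)
  also have "\<dots> = (\<Sum>i\<in>I. \<Sum>r\<in>R. \<Sum>c\<in>C. \<Sum>j\<in>J. f r c i j)" by (rule sum.swap)
  also have "\<dots> = (\<Sum>i\<in>I. \<Sum>r\<in>R. \<Sum>j\<in>J. \<Sum>c\<in>C. f r c i j)"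
    by (intro sum.cong refl, rule sum.swap)
  also have "\<dots> = (\<Sum>i\<in>I. \<Sum>j\<in>J. \<Sum>r\<in>R. \<Sum>c\<in>C. f r c i j)"
    by (intro sum.cong refl, rule sum.swap)
  finally show ?thesis .
qed

lemma sum_prod_sep:
  fixes s :: real
  shows "(\<Sum>r\<in>R. \<Sum>c\<in>C. s * ((P r * Q r) * (P' c * Q' c))) = s * ((\<Sum>r\<in>R. P r * Q r) * (\<Sum>c\<in>C. P' c * Q' c))"
  by (simp add: sum_distrib_left sum_distrib_right mult_ac sum.swap[of _ C])

lemma finner_svd:
  assumes A: "is_svd R C A k \<sigma> u v" and B: "is_svd R C B l \<tau> x y"
  shows "finner R C A B = (\<Sum>i<k. \<Sum>j<l. \<sigma> i * \<tau> j * (ipr R (u i) (x j) * ipr C (v i) (y j)))"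
proof -
  have "finner R C A B = (\<Sum>r\<in>R. \<Sum>c\<in>C. (\<Sum>i<k. \<sigma> i * u i r * v i c) * (\<Sum>j<l. \<tau> j * x j r * y j c))"
    unfolding finner_def using A B by (simp add: is_svd_def)
  also have "\<dots> = (\<Sum>r\<in>R. \<Sum>c\<in>C. \<Sum>i<k. \<Sum>j<l. \<sigma> i * \<tau> j * ((u i r * x j r) * (v i c * y j c)))"
    by (simp add: sum_product mult_ac)
  also have "\<dots> = (\<Sum>i<k. \<Sum>j<l. \<Sum>r\<in>R. \<Sum>c\<in>C. \<sigma> i * \<tau> j * ((u i r * x j r) * (v i c * y j c)))"
    by (rule sum4_swap)
  also have "\<dots> = (\<Sum>i<k. \<Sum>j<l. \<sigma> i * \<tau> j * ((\<Sum>r\<in>R. u i r * x j r) * (\<Sum>c\<in>C. v i c * y j c)))"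
    by (intro sum.cong refl, rule sum_prod_sep)
  finally show ?thesis by (simp add: ipr_def)
qed

lemma finner_self_svd:
  assumes A: "is_svd R C A k \<sigma> u v"
  shows "finner R C A A = (\<Sum>i<k. (\<sigma> i)\<^sup>2)"
proof -
  have "finner R C A A = (\<Sum>i<k. \<Sum>j<k. \<sigma> i * \<sigma> j * (ipr R (u i) (u j) * ipr C (v i) (v j)))"
    by (rule finner_svd[OF A A])
  also have "\<dots> = (\<Sum>i<k. \<Sum>j<k. if i = j then (\<sigma> i)\<^sup>2 else 0)"
    by (intro sum.cong refl) (use A in \<open>auto simp: is_svd_def orthon_def power2_eq_square\<close>)
  also have "\<dots> = (\<Sum>i<k. (\<sigma> i)\<^sup>2)" by simp
  finally show ?thesis .
qed

definition ind :: "nat \<Rightarrow> nat \<Rightarrow> real" where "ind i k = (if i \<le> k then 1 else 0)"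

lemma sum_ind_filter:
  assumes "finite A"
  shows "(\<Sum>k\<in>A. ind i k * f k) = (\<Sum>k\<in>{k\<in>A. i \<le> k}. f k)"
proof -
  have "(\<Sum>k\<in>A. ind i k * f k) = (\<Sum>k\<in>A. if i \<le> k then f k else 0)"
    by (intro sum.cong) (auto simp: ind_def)
  also have "\<dots> = (\<Sum>k\<in>{k\<in>A. i \<le> k}. f k)" using assms by (simp add: sum.inter_filter)
  finally show ?thesis .
qed

lemma sum_ind: "k < n \<Longrightarrow> (\<Sum>i<n. ind i k) = real k + 1"
proof -
  assume "k < n"
  have "(\<Sum>i<n. ind i k) = (\<Sum>i<n. if i \<le> k then 1 else 0)"
    by (intro sum.cong) (auto simp: ind_def)
  also have "\<dots> = (\<Sum>i\<in>{i\<in>{..<n}. i \<le> k}. 1)"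
    by (rule sum.inter_filter[where A="{..<n}" and g="\<lambda>_. 1::real" and P="\<lambda>i. i \<le> k", symmetric]) simp
  also have "{i\<in>{..<n}. i \<le> k} = {..k}" using \<open>k < n\<close> by auto
  finally show ?thesis by simp
qed

lemma ind_min: "ind i k * ind i l = ind i (min k l)"
  unfolding ind_def by auto

lemma telescope_dec:
  fixes a :: "nat \<Rightarrow> real"
  assumes "i < n"
  shows "(\<Sum>k<n. ind i k * (a k - (if Suc k < n then a (Suc k) else 0))) = a i"
proof -
  define a' where "a' k = (if k < n then a k else 0)" for k
  have "(\<Sum>k<n. ind i k * (a k - (if Suc k < n then a (Suc k) else 0)))
      = (\<Sum>k\<in>{k\<in>{..<n}. i \<le> k}. a k - (if Suc k < n then a (Suc k) else 0))"
    by (rule sum_ind_filter) simp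
  also have "{k\<in>{..<n}. i \<le> k} = {i..<n}" by auto
  also have "(\<Sum>k\<in>{i..<n}. a k - (if Suc k < n then a (Suc k) else 0)) = (\<Sum>k\<in>{i..<n}. a' k - a' (Suc k))"
    by (intro sum.cong) (auto simp: a'_def)
  also have "(\<Sum>k\<in>{i..<n}. a' k - a' (Suc k)) = a' i - a' n"
    using sum_Suc_diff'[of i n "\<lambda>k. - a' k"] assms by simp
  finally show ?thesis using assms by (simp add: a'_def)
qed

lemma rearr:
  fixes a b :: "nat \<Rightarrow> real" and W :: "nat \<Rightarrow> nat \<Rightarrow> real"
  assumes da: "dec n a" and db: "dec n b" and a0: "\<forall>i<n. a i \<ge> 0" and b0: "\<forall>i<n. b i \<ge> 0"
    and W0: "\<forall>i j. W i j \<ge> 0"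
    and Wr: "\<forall>i<n. (\<Sum>j<n. W i j) \<le> 1" and Wc: "\<forall>j<n. (\<Sum>i<n. W i j) \<le> 1"
  shows "(\<Sum>i<n. \<Sum>j<n. a i * b j * W i j) \<le> (\<Sum>i<n. a i * b i)"
proof -
  define \<alpha> where "\<alpha> k = a k - (if Suc k < n then a (Suc k) else 0)" for k
  define \<beta> where "\<beta> k = b k - (if Suc k < n then b (Suc k) else 0)" for k
  have \<alpha>0: "\<alpha> k \<ge> 0" if "k < n" for k
    using da a0 that unfolding \<alpha>_def dec_def by auto
  have \<beta>0: "\<beta> k \<ge> 0" if "k < n" for k
    using db b0 that unfolding \<beta>_def dec_def by auto
  have ha: "a i = (\<Sum>k<n. ind i k * \<alpha> k)" if "i < n" for i
    unfolding \<alpha>_def using telescope_dec[OF that] by simp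
  have hb: "b i = (\<Sum>k<n. ind i k * \<beta> k)" if "i < n" for i
    unfolding \<beta>_def using telescope_dec[OF that] by simp
  have L: "(\<Sum>i<n. \<Sum>j<n. a i * b j * W i j)
      = (\<Sum>k<n. \<Sum>l<n. \<alpha> k * \<beta> l * (\<Sum>i<n. \<Sum>j<n. ind i k * ind j l * W i j))"
  proof -
    have "(\<Sum>i<n. \<Sum>j<n. a i * b j * W i j)
        = (\<Sum>i<n. \<Sum>j<n. (\<Sum>k<n. ind i k * \<alpha> k) * (\<Sum>l<n. ind j l * \<beta> l) * W i j)"
      by (intro sum.cong refl) (simp add: ha hb)
    also have "\<dots> = (\<Sum>i<n. \<Sum>j<n. \<Sum>l<n. \<Sum>k<n. (ind i k * \<alpha> k) * (ind j l * \<beta> l) * W i j)"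
      by (simp only: sum_distrib_left sum_distrib_right)
    also have "\<dots> = (\<Sum>l<n. \<Sum>k<n. \<Sum>i<n. \<Sum>j<n. (ind i k * \<alpha> k) * (ind j l * \<beta> l) * W i j)"
      by (rule sum4_swap)
    also have "\<dots> = (\<Sum>l<n. \<Sum>k<n. \<alpha> k * \<beta> l * (\<Sum>i<n. \<Sum>j<n. ind i k * ind j l * W i j))"
      by (intro sum.cong refl) (simp add: sum_distrib_left mult_ac)
    also have "\<dots> = (\<Sum>k<n. \<Sum>l<n. \<alpha> k * \<beta> l * (\<Sum>i<n. \<Sum>j<n. ind i k * ind j l * W i j))"
      by (rule sum.swap)
    finally show ?thesis .
  qed
  have R: "(\<Sum>i<n. a i * b i) = (\<Sum>k<n. \<Sum>l<n. \<alpha> k * \<beta> l * (\<Sum>i<n. ind i k * ind i l))"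
  proof -
    have "(\<Sum>i<n. a i * b i) = (\<Sum>i<n. (\<Sum>k<n. ind i k * \<alpha> k) * (\<Sum>l<n. ind i l * \<beta> l))"
      by (intro sum.cong refl) (simp add: ha hb)
    also have "\<dots> = (\<Sum>i<n. \<Sum>k<n. \<Sum>l<n. (ind i k * \<alpha> k) * (ind i l * \<beta> l))"
      by (simp only: sum_product)
    also have "\<dots> = (\<Sum>i<n. \<Sum>k<n. \<Sum>l<n. \<alpha> k * \<beta> l * (ind i k * ind i l))"
      by (simp add: mult_ac)
    also have "\<dots> = (\<Sum>k<n. \<Sum>i<n. \<Sum>l<n. \<alpha> k * \<beta> l * (ind i k * ind i l))"
      by (rule sum.swap)
    also have "\<dots> = (\<Sum>k<n. \<Sum>l<n. \<Sum>i<n. \<alpha> k * \<beta> l * (ind i k * ind i l))"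
      by (rule sum.cong[OF refl], rule sum.swap)
    also have "\<dots> = (\<Sum>k<n. \<Sum>l<n. \<alpha> k * \<beta> l * (\<Sum>i<n. ind i k * ind i l))"
      by (simp add: sum_distrib_left)
    finally show ?thesis .
  qed
  have inner: "(\<Sum>i<n. \<Sum>j<n. ind i k * ind j l * W i j) \<le> (\<Sum>i<n. ind i k * ind i l)"
    if kl: "k < n" "l < n" for k l
  proof -
    have ind01: "0 \<le> ind i k" "ind i k \<le> 1" for i k unfolding ind_def by auto
    have hA: "ind i k * ind j l * W i j \<le> ind i k * W i j" for i j
      using W0 unfolding ind_def by auto
    have hB: "ind i k * ind j l * W i j \<le> ind j l * W i j" for i j
      using W0 unfolding ind_def by auto
    have "(\<Sum>i<n. \<Sum>j<n. ind i k * ind j l * W i j) \<le> (\<Sum>i<n. ind i k * (\<Sum>j<n. W i j))"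
      unfolding sum_distrib_left by (intro sum_mono) (rule hA)
    also have "\<dots> \<le> (\<Sum>i<n. ind i k)"
      by (intro sum_mono) (simp add: Wr ind01 mult_left_le)
    also have "\<dots> = real k + 1" using sum_ind[OF kl(1)] .
    finally have 1: "(\<Sum>i<n. \<Sum>j<n. ind i k * ind j l * W i j) \<le> real k + 1" .
    have "(\<Sum>i<n. \<Sum>j<n. ind i k * ind j l * W i j) = (\<Sum>j<n. \<Sum>i<n. ind i k * ind j l * W i j)"
      by (rule sum.swap)
    also have "\<dots> \<le> (\<Sum>j<n. ind j l * (\<Sum>i<n. W i j))"
      unfolding sum_distrib_left by (intro sum_mono) (rule hB)
    also have "\<dots> \<le> (\<Sum>j<n. ind j l)"
      by (intro sum_mono) (simp add: Wc ind01 mult_left_le)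
    also have "\<dots> = real l + 1" using sum_ind[OF kl(2)] .
    finally have 2: "(\<Sum>i<n. \<Sum>j<n. ind i k * ind j l * W i j) \<le> real l + 1" .
    have "(\<Sum>i<n. ind i k * ind i l) = real (min k l) + 1"
      unfolding ind_min using sum_ind[of "min k l" n] kl by simp
    then show ?thesis using 1 2 by (simp add: min_def)
  qed
  show ?thesis unfolding L R
    by (intro sum_mono mult_left_mono inner) (auto intro: mult_nonneg_nonneg \<alpha>0 \<beta>0)
qed

lemma abs_mult_le_sq: "\<bar>p\<bar> * \<bar>q\<bar> \<le> (p\<^sup>2 + q\<^sup>2) / (2::real)"
proof -
  have "0 \<le> (\<bar>p\<bar> - \<bar>q\<bar>)\<^sup>2" by simp
  then show ?thesis by (simp add: power2_eq_square algebra_simps)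
qed

lemma sum_pad: "k \<le> n \<Longrightarrow> (\<Sum>i<n. g (pad k f i) i) = (\<Sum>i<k. g (f i) i) + (\<Sum>i\<in>{k..<n}. g 0 i)"
proof -
  assume "k \<le> n"
  then have "{..<n} = {..<k} \<union> {k..<n}" by auto
  moreover have "(\<Sum>i\<in>{..<k} \<union> {k..<n}. g (pad k f i) i) = (\<Sum>i<k. g (pad k f i) i) + (\<Sum>i\<in>{k..<n}. g (pad k f i) i)"
    by (rule sum.union_disjoint) auto
  ultimately have "(\<Sum>i<n. g (pad k f i) i) = (\<Sum>i<k. g (pad k f i) i) + (\<Sum>i\<in>{k..<n}. g (pad k f i) i)"
    by simp
  also have "(\<Sum>i<k. g (pad k f i) i) = (\<Sum>i<k. g (f i) i)" by (intro sum.cong) (auto simp: pad_def)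
  also have "(\<Sum>i\<in>{k..<n}. g (pad k f i) i) = (\<Sum>i\<in>{k..<n}. g 0 i)" by (intro sum.cong) (auto simp: pad_def)
  finally show ?thesis .
qed

lemma dec_pad:
  assumes "dec k \<sigma>" "\<forall>i<k. \<sigma> i > 0"
  shows "dec n (pad k \<sigma>)" "\<forall>i. pad k \<sigma> i \<ge> 0"
  using assms unfolding dec_def pad_def by (auto simp: less_imp_le)

lemma von_neumann:
  assumes A: "is_svd R C A k \<sigma> u v" "dec k \<sigma>" and B: "is_svd R C B l \<tau> x y" "dec l \<tau>"
    and n: "k \<le> n" "l \<le> n"
  shows "finner R C A B \<le> (\<Sum>i<n. pad k \<sigma> i * pad l \<tau> i)"
proof -
  define P where "P i j = ipr R (u i) (x j)" for i j
  define Q where "Q i j = ipr C (v i) (y j)" for i j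
  define W where "W i j = (if i < k \<and> j < l then \<bar>P i j\<bar> * \<bar>Q i j\<bar> else 0)" for i j
  have \<sigma>0: "\<forall>i<k. \<sigma> i > 0" and \<tau>0: "\<forall>i<l. \<tau> i > 0" using A(1) B(1) by (auto simp: is_svd_def)
  have "finner R C A B = (\<Sum>i<k. \<Sum>j<l. \<sigma> i * \<tau> j * (P i j * Q i j))"
    unfolding P_def Q_def by (rule finner_svd[OF A(1) B(1)])
  also have "\<dots> \<le> (\<Sum>i<k. \<Sum>j<l. \<sigma> i * \<tau> j * W i j)"
  proof (intro sum_mono)
    fix i j assume "i \<in> {..<k}" "j \<in> {..<l}"
    then have "\<sigma> i * \<tau> j > 0" using \<sigma>0 \<tau>0 by simp
    moreover have "P i j * Q i j \<le> \<bar>P i j\<bar> * \<bar>Q i j\<bar>" by (simp add: abs_mult[symmetric])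
    ultimately show "\<sigma> i * \<tau> j * (P i j * Q i j) \<le> \<sigma> i * \<tau> j * W i j"
      using \<open>i \<in> {..<k}\<close> \<open>j \<in> {..<l}\<close> by (simp add: W_def mult_left_mono)
  qed
  also have "\<dots> = (\<Sum>i<n. \<Sum>j<n. pad k \<sigma> i * pad l \<tau> j * W i j)"
  proof -
    have "(\<Sum>i<n. \<Sum>j<n. pad k \<sigma> i * pad l \<tau> j * W i j) = (\<Sum>i<k. \<Sum>j<n. pad k \<sigma> i * pad l \<tau> j * W i j)"
      by (rule sum.mono_neutral_right) (use n in \<open>auto simp: W_def\<close>)
    also have "\<dots> = (\<Sum>i<k. \<Sum>j<l. pad k \<sigma> i * pad l \<tau> j * W i j)"
      by (intro sum.cong refl sum.mono_neutral_right) (use n in \<open>auto simp: W_def\<close>)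
    also have "\<dots> = (\<Sum>i<k. \<Sum>j<l. \<sigma> i * \<tau> j * W i j)"
      by (intro sum.cong refl) (simp add: pad_def)
    finally show ?thesis by simp
  qed
  also have "\<dots> \<le> (\<Sum>i<n. pad k \<sigma> i * pad l \<tau> i)"
  proof (rule rearr)
    show "dec n (pad k \<sigma>)" "dec n (pad l \<tau>)" using dec_pad A(2) B(2) \<sigma>0 \<tau>0 by blast+
    show "\<forall>i<n. 0 \<le> pad k \<sigma> i" "\<forall>i<n. 0 \<le> pad l \<tau> i" using dec_pad A(2) B(2) \<sigma>0 \<tau>0 by blast+
    show "\<forall>i j. 0 \<le> W i j" by (simp add: W_def)
    show "\<forall>i<n. (\<Sum>j<n. W i j) \<le> 1"
    proof (intro allI impI)
      fix i assume "i < n"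
      show "(\<Sum>j<n. W i j) \<le> 1"
      proof (cases "i < k")
        case True
        have "(\<Sum>j<n. W i j) = (\<Sum>j<l. \<bar>P i j\<bar> * \<bar>Q i j\<bar>)"
        proof -
          have "(\<Sum>j<n. W i j) = (\<Sum>j<l. W i j)"
            by (rule sum.mono_neutral_right) (use n in \<open>auto simp: W_def\<close>)
          then show ?thesis using True by (simp add: W_def)
        qed
        also have "\<dots> \<le> (\<Sum>j<l. ((P i j)\<^sup>2 + (Q i j)\<^sup>2) / 2)"
          by (intro sum_mono abs_mult_le_sq)
        also have "\<dots> = ((\<Sum>j<l. (ipr R (u i) (x j))\<^sup>2) + (\<Sum>j<l. (ipr C (v i) (y j))\<^sup>2)) / 2"
          by (simp only: add_divide_distrib sum.distrib sum_divide_distrib[symmetric] P_def Q_def)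
        also have "\<dots> \<le> (ipr R (u i) (u i) + ipr C (v i) (v i)) / 2"
          using bessel[of R l x "u i"] bessel[of C l y "v i"] B(1) by (simp add: is_svd_def)
        also have "\<dots> = 1" using A(1) True by (simp add: is_svd_def orthon_def)
        finally show ?thesis .
      next
        case False then show ?thesis by (simp add: W_def)
      qed
    qed
    show "\<forall>j<n. (\<Sum>i<n. W i j) \<le> 1"
    proof (intro allI impI)
      fix j assume "j < n"
      show "(\<Sum>i<n. W i j) \<le> 1"
      proof (cases "j < l")
        case True
        have "(\<Sum>i<n. W i j) = (\<Sum>i<k. \<bar>P i j\<bar> * \<bar>Q i j\<bar>)"
        proof -
          have "(\<Sum>i<n. W i j) = (\<Sum>i<k. W i j)"
            by (rule sum.mono_neutral_right) (use n in \<open>auto simp: W_def\<close>)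
          then show ?thesis using True by (simp add: W_def)
        qed
        also have "\<dots> \<le> (\<Sum>i<k. ((P i j)\<^sup>2 + (Q i j)\<^sup>2) / 2)"
          by (intro sum_mono abs_mult_le_sq)
        also have "\<dots> = ((\<Sum>i<k. (ipr R (x j) (u i))\<^sup>2) + (\<Sum>i<k. (ipr C (y j) (v i))\<^sup>2)) / 2"
          by (simp only: add_divide_distrib sum.distrib sum_divide_distrib[symmetric] P_def Q_def ipr_sym)
        also have "\<dots> \<le> (ipr R (x j) (x j) + ipr C (y j) (y j)) / 2"
          using bessel[of R k u "x j"] bessel[of C k v "y j"] A(1) by (simp add: is_svd_def)
        also have "\<dots> = 1" using B(1) True by (simp add: is_svd_def orthon_def)
        finally show ?thesis .
      next
        case False then show ?thesis by (simp add: W_def)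
      qed
    qed
  qed
  finally show ?thesis .
qed

lemma finner_diff:
  "finner R C (\<lambda>r c. A r c - B r c) (\<lambda>r c. A r c - B r c) = finner R C A A - 2 * finner R C A B + finner R C B B"
  unfolding finner_def by (simp add: algebra_simps power2_eq_square sum.distrib sum_subtractf sum_distrib_left)

lemma finner_self_pad:
  assumes "is_svd R C A k \<sigma> u v" "k \<le> n"
  shows "finner R C A A = (\<Sum>i<n. (pad k \<sigma> i)\<^sup>2)"
  using finner_self_svd[OF assms(1)] sum_pad[OF assms(2), of "\<lambda>x i. x\<^sup>2" \<sigma>] by simp

lemma mirsky:
  assumes A: "is_svd R C A k \<sigma> u v" "dec k \<sigma>" and B: "is_svd R C B l \<tau> x y" "dec l \<tau>"
    and n: "k \<le> n" "l \<le> n"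
  shows "(\<Sum>i<n. (pad k \<sigma> i - pad l \<tau> i)\<^sup>2) \<le> finner R C (\<lambda>r c. A r c - B r c) (\<lambda>r c. A r c - B r c)"
proof -
  have "(\<Sum>i<n. (pad k \<sigma> i - pad l \<tau> i)\<^sup>2)
      = (\<Sum>i<n. (pad k \<sigma> i)\<^sup>2) - 2 * (\<Sum>i<n. pad k \<sigma> i * pad l \<tau> i) + (\<Sum>i<n. (pad l \<tau> i)\<^sup>2)"
    by (simp add: power2_diff sum.distrib sum_subtractf sum_distrib_left mult.assoc)
  also have "\<dots> \<le> finner R C A A - 2 * finner R C A B + finner R C B B"
    using von_neumann[OF A B n] finner_self_pad[OF A(1) n(1)] finner_self_pad[OF B(1) n(2)] by simp
  finally show ?thesis by (simp add: finner_diff)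
qed

lemma svd_unique:
  assumes A1: "is_svd R C A k \<sigma> u v" and A2: "is_svd R C A l \<tau> x y"
  shows "mset (map \<sigma> [0..<k]) = mset (map \<tau> [0..<l])"
proof -
  obtain \<sigma>' u' v' where s1: "is_svd R C A k \<sigma>' u' v'" "dec k \<sigma>'" "mset (map \<sigma>' [0..<k]) = mset (map \<sigma> [0..<k])"
    using svd_sorted_exists[OF A1] by blast
  obtain \<tau>' x' y' where s2: "is_svd R C A l \<tau>' x' y'" "dec l \<tau>'" "mset (map \<tau>' [0..<l]) = mset (map \<tau> [0..<l])"
    using svd_sorted_exists[OF A2] by blast
  define n where "n = max k l"
  have "(\<Sum>i<n. (pad k \<sigma>' i - pad l \<tau>' i)\<^sup>2) \<le> finner R C (\<lambda>r c. A r c - A r c) (\<lambda>r c. A r c - A r c)"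
    by (rule mirsky[OF s1(1,2) s2(1,2)]) (auto simp: n_def)
  also have "\<dots> = 0" by (simp add: finner_def)
  finally have "(\<Sum>i<n. (pad k \<sigma>' i - pad l \<tau>' i)\<^sup>2) \<le> 0" .
  then have eq: "pad k \<sigma>' i = pad l \<tau>' i" if "i < n" for i
    using that sum_nonneg_eq_0_iff[of "{..<n}" "\<lambda>i. (pad k \<sigma>' i - pad l \<tau>' i)\<^sup>2"]
    by (simp add: order_antisym sum_nonneg)
  have "k = l"
  proof (rule ccontr)
    assume "k \<noteq> l"
    then consider "k < l" | "l < k" by linarith
    then show False
    proof cases
      case 1
      then have "pad k \<sigma>' k = pad l \<tau>' k" using eq by (simp add: n_def)
      then show False using 1 s2(1) by (force simp: pad_def is_svd_def)
    next
      case 2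
      then have "pad k \<sigma>' l = pad l \<tau>' l" using eq by (simp add: n_def)
      then show False using 2 s1(1) by (force simp: pad_def is_svd_def)
    qed
  qed
  have "map \<sigma>' [0..<k] = map \<tau>' [0..<l]"
    using eq \<open>k = l\<close> by (auto simp: n_def pad_def)
  then show ?thesis using s1(3) s2(3) by simp
qed

lemma sum_mset_map_upt: "(\<Sum>s\<in>#mset (map \<sigma> [0..<k]). f s) = (\<Sum>i<k. f (\<sigma> i))"
proof -
  have "(\<Sum>s\<in>#mset (map \<sigma> [0..<k]). f s) = sum_list (map f (map \<sigma> [0..<k]))"
    by (metis mset_map sum_mset_sum_list)
  also have "\<dots> = sum_list (map (f \<circ> \<sigma>) [0..<k])" by simp
  also have "\<dots> = (\<Sum>i<k. f (\<sigma> i))" by (simp add: interv_sum_list_conv_sum_set_nat atLeast0LessThan)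
  finally show ?thesis .
qed

lemma sum_mset_sv:
  fixes f :: "real \<Rightarrow> real"
  shows "(\<Sum>s\<in>#(mset (map \<sigma> [0..<k]) + replicate_mset m 0). f s) = (\<Sum>i<k. f (\<sigma> i)) + of_nat m * f 0"
proof -
  have "(\<Sum>s\<in>#(mset (map \<sigma> [0..<k]) + replicate_mset m 0). f s)
      = (\<Sum>s\<in>#mset (map \<sigma> [0..<k]). f s) + (\<Sum>s\<in>#replicate_mset m 0. f s)"
    by (simp only: image_mset_union sum_mset.union)
  also have "(\<Sum>s\<in>#mset (map \<sigma> [0..<k]). f s) = (\<Sum>i<k. f (\<sigma> i))" by (rule sum_mset_map_upt)
  also have "(\<Sum>s\<in>#replicate_mset m 0. f s) = of_nat m * f 0" by simp
  finally show ?thesis .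
qed

lemma sv_char:
  assumes "is_svd R C A k \<sigma> u v"
  shows "singular_values R C A = mset (map \<sigma> [0..<k]) + replicate_mset (min (card R) (card C) - k) 0"
proof -
  have "(THE S. svd_pos R C A S) = mset (map \<sigma> [0..<k])"
  proof (rule the_equality)
    show "svd_pos R C A (mset (map \<sigma> [0..<k]))" using assms svd_pos_iff by blast
    fix S assume "svd_pos R C A S"
    then obtain l \<tau> x y where "S = mset (map \<tau> [0..<l])" "is_svd R C A l \<tau> x y"
      unfolding svd_pos_iff by blast
    then show "S = mset (map \<sigma> [0..<k])" using svd_unique[OF assms] by simp
  qed
  then show ?thesis unfolding singular_values_def by (simp add: Let_def)
qed

definition H :: "nat \<Rightarrow> (nat \<Rightarrow> real) \<Rightarrow> real" where
  "H K p = - (\<Sum>i<K. if p i = 0 then 0 else p i * ln (p i))"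

definition prob :: "nat \<Rightarrow> (nat \<Rightarrow> real) \<Rightarrow> bool" where
  "prob K p \<longleftrightarrow> (\<forall>i. p i \<ge> 0) \<and> (\<Sum>i<K. p i) = 1"

lemma svd_k_le:
  assumes "finite R" "finite C" "is_svd R C A k \<sigma> u v"
  shows "k \<le> min (card R) (card C)"
  using orthon_card[OF assms(1)] orthon_card[OF assms(2)] assms(3) by (auto simp: is_svd_def)

lemma QE_char:
  assumes fin: "finite R" "finite C" and A: "is_svd R C A k \<sigma> u v" and t: "finner R C A A > 0"
  shows "QE_mat R C A = H (min (card R) (card C)) (\<lambda>i. (pad k \<sigma> i)\<^sup>2 / finner R C A A)"
proof -
  define K where "K = min (card R) (card C)"
  have kK: "k \<le> K" unfolding K_def by (rule svd_k_le[OF fin A])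
  define t where "t = finner R C A A"
  have t_eq: "(\<Sum>s\<in>#singular_values R C A. s\<^sup>2) = t"
    unfolding sv_char[OF A] t_def finner_self_svd[OF A] sum_mset_sv by simp
  have \<sigma>0: "\<forall>i<k. \<sigma> i > 0" using A by (simp add: is_svd_def)
  define g where "g s = (if s = 0 then 0 else (s\<^sup>2 / t) * ln (s\<^sup>2 / t))" for s :: real
  define h where "h x = (if x\<^sup>2 / t = 0 then 0 else x\<^sup>2 / t * ln (x\<^sup>2 / t))" for x :: real
  have "(\<Sum>s\<in>#singular_values R C A. g s) = (\<Sum>i<k. g (\<sigma> i))"
    unfolding sv_char[OF A] sum_mset_sv by (simp add: g_def)
  also have "\<dots> = (\<Sum>i<k. h (\<sigma> i))"
    by (intro sum.cong refl) (use \<sigma>0 t in \<open>auto simp: g_def h_def t_def\<close>)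
  also have "\<dots> = (\<Sum>i<K. h (pad k \<sigma> i))"
    using sum_pad[OF kK, of "\<lambda>x i. h x" \<sigma>] by (simp add: h_def)
  finally have X: "(\<Sum>s\<in>#singular_values R C A. g s) = (\<Sum>i<K. h (pad k \<sigma> i))" .
  show ?thesis
    using t X[unfolded g_def h_def] unfolding QE_mat_def H_def Let_def t_eq t_def[symmetric] K_def[symmetric]
    by simp
qed


lemma cauchy_sum:
  fixes x y :: "nat \<Rightarrow> real"
  shows "(\<Sum>i<K. \<bar>x i\<bar> * \<bar>y i\<bar>) \<le> sqrt (\<Sum>i<K. (x i)\<^sup>2) * sqrt (\<Sum>i<K. (y i)\<^sup>2)"
  using L2_set_mult_ineq[of x y "{..<K}"] by (simp add: L2_set_def)

lemma finner_cs: "finner R C A B \<le> sqrt (finner R C A A) * sqrt (finner R C B B)"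
proof -
  have "finner R C A B = (\<Sum>z\<in>R \<times> C. A (fst z) (snd z) * B (fst z) (snd z))"
    unfolding finner_def by (simp add: sum.cartesian_product case_prod_beta)
  also have "\<dots> \<le> (\<Sum>z\<in>R \<times> C. \<bar>A (fst z) (snd z)\<bar> * \<bar>B (fst z) (snd z)\<bar>)"
    by (intro sum_mono) (simp add: abs_mult[symmetric])
  also have "\<dots> \<le> L2_set (\<lambda>z. A (fst z) (snd z)) (R \<times> C) * L2_set (\<lambda>z. B (fst z) (snd z)) (R \<times> C)"
    by (rule L2_set_mult_ineq)
  also have "\<dots> = sqrt (finner R C A A) * sqrt (finner R C B B)"
    unfolding L2_set_def finner_def by (simp add: sum.cartesian_product case_prod_beta power2_eq_square)
  finally show ?thesis .
qed

lemma finner_nonneg: "finner R C A A \<ge> 0"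
  unfolding finner_def by (intro sum_nonneg) simp

lemma finner_scale:
  "finner R C (\<lambda>r c. A r c / a) (\<lambda>r c. B r c / b) = finner R C A B / (a * b)"
  unfolding finner_def by (simp add: sum_divide_distrib)

lemma svd_scale:
  assumes "is_svd R C A k \<sigma> u v" "a > 0"
  shows "is_svd R C (\<lambda>r c. A r c / a) k (\<lambda>i. \<sigma> i / a) u v"
  using assms unfolding is_svd_def by (simp add: sum_divide_distrib)

lemma dec_scale: "dec k \<sigma> \<Longrightarrow> a > 0 \<Longrightarrow> dec k (\<lambda>i. \<sigma> i / a)"
  unfolding dec_def by (simp add: divide_right_mono)

lemma pad_scale: "pad k (\<lambda>i. \<sigma> i / a) i = pad k \<sigma> i / a"
  unfolding pad_def by simp

lemma sorted_svd:
  assumes "finite R" "finite C"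
  obtains k \<sigma> u v where "is_svd R C A k \<sigma> u v" "dec k \<sigma>"
  using svd_exists[OF assms, of A] svd_sorted_exists by blast

lemma prob_of_svd:
  assumes fin: "finite R" "finite C" and A: "is_svd R C A k \<sigma> u v" and t: "finner R C A A > 0"
  shows "prob (min (card R) (card C)) (\<lambda>i. (pad k \<sigma> i)\<^sup>2 / finner R C A A)"
proof -
  have kK: "k \<le> min (card R) (card C)" by (rule svd_k_le[OF fin A])
  have "(\<Sum>i<min (card R) (card C). (pad k \<sigma> i)\<^sup>2 / finner R C A A) = (\<Sum>i<k. (\<sigma> i)\<^sup>2) / finner R C A A"
    using sum_pad[OF kK, of "\<lambda>x i. x\<^sup>2 / finner R C A A" \<sigma>] by (simp add: sum_divide_distrib)
  also have "\<dots> = 1" using finner_self_svd[OF A] t by simp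
  finally show ?thesis unfolding prob_def using finner_nonneg[of R C A] by simp
qed

lemma QE_cont:
  assumes fin: "finite R" "finite C" and tA: "finner R C A A > 0" and tB: "finner R C B B > 0"
  shows "\<exists>p q. QE_mat R C A = H (min (card R) (card C)) p \<and> QE_mat R C B = H (min (card R) (card C)) q
     \<and> prob (min (card R) (card C)) p \<and> prob (min (card R) (card C)) q
     \<and> (\<Sum>i<min (card R) (card C). \<bar>p i - q i\<bar>)
         \<le> 2 * sqrt (finner R C (\<lambda>r c. A r c / sqrt (finner R C A A) - B r c / sqrt (finner R C B B))
                                  (\<lambda>r c. A r c / sqrt (finner R C A A) - B r c / sqrt (finner R C B B)))"
proof -
  define K where "K = min (card R) (card C)"
  define \<alpha> where "\<alpha> = sqrt (finner R C A A)"
  define \<beta> where "\<beta> = sqrt (finner R C B B)"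
  have \<alpha>0: "\<alpha> > 0" and \<beta>0: "\<beta> > 0" using tA tB by (simp_all add: \<alpha>_def \<beta>_def)
  obtain k \<sigma> u v where A: "is_svd R C A k \<sigma> u v" "dec k \<sigma>" using sorted_svd[OF fin] by blast
  obtain l \<tau> x y where B: "is_svd R C B l \<tau> x y" "dec l \<tau>" using sorted_svd[OF fin] by blast
  have kK: "k \<le> K" and lK: "l \<le> K" unfolding K_def using svd_k_le[OF fin A(1)] svd_k_le[OF fin B(1)] by auto
  define p where "p i = (pad k \<sigma> i)\<^sup>2 / finner R C A A" for i
  define q where "q i = (pad l \<tau> i)\<^sup>2 / finner R C B B" for i
  have QA: "QE_mat R C A = H K p" unfolding p_def K_def by (rule QE_char[OF fin A(1) tA])
  have QB: "QE_mat R C B = H K q" unfolding q_def K_def by (rule QE_char[OF fin B(1) tB])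
  have pA: "prob K p" unfolding p_def K_def by (rule prob_of_svd[OF fin A(1) tA])
  have pB: "prob K q" unfolding q_def K_def by (rule prob_of_svd[OF fin B(1) tB])
  define a2 where "a2 = finner R C (\<lambda>r c. A r c / \<alpha> - B r c / \<beta>) (\<lambda>r c. A r c / \<alpha> - B r c / \<beta>)"
  define X where "X i = pad k \<sigma> i / \<alpha> - pad l \<tau> i / \<beta>" for i
  define Y where "Y i = pad k \<sigma> i / \<alpha> + pad l \<tau> i / \<beta>" for i
  have mir: "(\<Sum>i<K. (X i)\<^sup>2) \<le> a2"
  proof -
    have "(\<Sum>i<K. (pad k (\<lambda>i. \<sigma> i / \<alpha>) i - pad l (\<lambda>i. \<tau> i / \<beta>) i)\<^sup>2)
        \<le> finner R C (\<lambda>r c. A r c / \<alpha> - B r c / \<beta>) (\<lambda>r c. A r c / \<alpha> - B r c / \<beta>)"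
      by (rule mirsky[OF svd_scale[OF A(1) \<alpha>0] dec_scale[OF A(2) \<alpha>0] svd_scale[OF B(1) \<beta>0] dec_scale[OF B(2) \<beta>0] kK lK])
    then show ?thesis by (simp add: X_def pad_scale a2_def)
  qed
  have ssA: "(\<Sum>i<K. (pad k \<sigma> i / \<alpha>)\<^sup>2) = 1"
    using pA unfolding prob_def p_def \<alpha>_def using finner_nonneg[of R C A] by (simp add: power_divide)
  have ssB: "(\<Sum>i<K. (pad l \<tau> i / \<beta>)\<^sup>2) = 1"
    using pB unfolding prob_def q_def \<beta>_def using finner_nonneg[of R C B] by (simp add: power_divide)
  have "(\<Sum>i<K. (Y i)\<^sup>2) \<le> (\<Sum>i<K. 2 * (pad k \<sigma> i / \<alpha>)\<^sup>2 + 2 * (pad l \<tau> i / \<beta>)\<^sup>2)"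
  proof (intro sum_mono)
    fix i
    have "0 \<le> (pad k \<sigma> i / \<alpha> - pad l \<tau> i / \<beta>)\<^sup>2" by simp
    then show "(Y i)\<^sup>2 \<le> 2 * (pad k \<sigma> i / \<alpha>)\<^sup>2 + 2 * (pad l \<tau> i / \<beta>)\<^sup>2"
      unfolding Y_def by (simp add: power2_eq_square algebra_simps)
  qed
  also have "\<dots> = 4" using ssA ssB by (simp add: sum.distrib sum_distrib_left[symmetric])
  finally have Y4: "(\<Sum>i<K. (Y i)\<^sup>2) \<le> 4" .
  have pq: "\<bar>p i - q i\<bar> = \<bar>X i\<bar> * \<bar>Y i\<bar>" for i
  proof -
    have "p i - q i = X i * Y i"
      unfolding p_def q_def X_def Y_def \<alpha>_def \<beta>_def using finner_nonneg[of R C A] finner_nonneg[of R C B]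
      by (simp add: power_divide algebra_simps power2_eq_square)
    then show ?thesis by (simp add: abs_mult)
  qed
  have "(\<Sum>i<K. \<bar>p i - q i\<bar>) \<le> sqrt (\<Sum>i<K. (X i)\<^sup>2) * sqrt (\<Sum>i<K. (Y i)\<^sup>2)"
    unfolding pq by (rule cauchy_sum)
  also have "\<dots> \<le> sqrt a2 * 2"
  proof (rule mult_mono)
    show "sqrt (\<Sum>i<K. (X i)\<^sup>2) \<le> sqrt a2" using mir by simp
    have "sqrt (\<Sum>i<K. (Y i)\<^sup>2) \<le> sqrt 4" using Y4 by (rule real_sqrt_le_mono)
    then show "sqrt (\<Sum>i<K. (Y i)\<^sup>2) \<le> 2" by simp
    show "0 \<le> sqrt a2" unfolding a2_def by (simp add: finner_nonneg)
    show "0 \<le> sqrt (\<Sum>i<K. (Y i)\<^sup>2)" by (simp add: sum_nonneg)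
  qed
  finally show ?thesis using QA QB pA pB unfolding K_def a2_def \<alpha>_def \<beta>_def by (auto simp: mult.commute)
qed

lemma norm_pert:
  assumes B: "finner R C B B = \<beta>\<^sup>2" "\<beta> > 0"
    and D: "finner R C (\<lambda>r c. A r c - B r c) (\<lambda>r c. A r c - B r c) \<le> d\<^sup>2" "0 \<le> d" "d < \<beta>"
  shows "finner R C A A > 0"
    and "finner R C (\<lambda>r c. A r c / sqrt (finner R C A A) - B r c / \<beta>) (\<lambda>r c. A r c / sqrt (finner R C A A) - B r c / \<beta>)
          \<le> d\<^sup>2 / (\<beta> * (\<beta> - d))"
proof -
  define \<alpha> where "\<alpha> = sqrt (finner R C A A)"
  define P where "P = finner R C A B"
  define Dv where "Dv = finner R C (\<lambda>r c. A r c - B r c) (\<lambda>r c. A r c - B r c)"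
  have fa: "0 \<le> finner R C A A" by (rule finner_nonneg)
  have \<alpha>0: "\<alpha> \<ge> 0" using fa by (simp add: \<alpha>_def)
  have aa: "finner R C A A = \<alpha>\<^sup>2" unfolding \<alpha>_def using fa by simp
  have bb: "sqrt (finner R C B B) = \<beta>" using B by simp
  have Dv_eq: "Dv = \<alpha>\<^sup>2 - 2 * P + \<beta>\<^sup>2" unfolding Dv_def finner_diff P_def aa B(1) ..
  have cs: "P \<le> \<alpha> * \<beta>" using finner_cs[of R C A B] unfolding P_def \<alpha>_def bb .
  have "(\<alpha> - \<beta>)\<^sup>2 \<le> Dv" using cs Dv_eq by (simp add: power2_diff)
  also have "\<dots> \<le> d\<^sup>2" using D(1) by (simp add: Dv_def)
  finally have "\<bar>\<alpha> - \<beta>\<bar> \<le> d" using D(2) by (simp add: abs_le_square_iff[symmetric] power2_abs)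
  then have a_ge: "\<alpha> \<ge> \<beta> - d" by simp
  then have "\<alpha> > 0" using D(3) by simp
  then show "finner R C A A > 0" using aa by simp
  have "finner R C (\<lambda>r c. A r c / \<alpha> - B r c / \<beta>) (\<lambda>r c. A r c / \<alpha> - B r c / \<beta>)
      = finner R C A A / (\<alpha> * \<alpha>) - 2 * (P / (\<alpha> * \<beta>)) + finner R C B B / (\<beta> * \<beta>)"
    unfolding finner_diff finner_scale P_def ..
  also have "\<dots> = 2 - 2 * P / (\<alpha> * \<beta>)"
    using \<open>\<alpha> > 0\<close> B aa by (simp add: power2_eq_square)
  also have "\<dots> = (Dv - (\<alpha> - \<beta>)\<^sup>2) / (\<alpha> * \<beta>)"
    using \<open>\<alpha> > 0\<close> B(2) unfolding Dv_eq by (simp add: field_simps power2_eq_square)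
  also have "\<dots> \<le> Dv / (\<alpha> * \<beta>)"
    using \<open>\<alpha> > 0\<close> B(2) by (simp add: divide_right_mono)
  also have "\<dots> \<le> d\<^sup>2 / (\<alpha> * \<beta>)"
    using \<open>\<alpha> > 0\<close> B(2) D(1) by (simp add: Dv_def divide_right_mono)
  also have "\<dots> \<le> d\<^sup>2 / (\<beta> * (\<beta> - d))"
  proof (rule divide_left_mono)
    show "\<beta> * (\<beta> - d) \<le> \<alpha> * \<beta>" using a_ge B(2) by (simp add: mult.commute mult_right_mono)
    show "0 < \<alpha> * \<beta> * (\<beta> * (\<beta> - d))" using \<open>\<alpha> > 0\<close> B(2) D(3) by simp
  qed simp
  finally show "finner R C (\<lambda>r c. A r c / sqrt (finner R C A A) - B r c / \<beta>) (\<lambda>r c. A r c / sqrt (finner R C A A) - B r c / \<beta>)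
          \<le> d\<^sup>2 / (\<beta> * (\<beta> - d))" unfolding \<alpha>_def .
qed

definition eta :: "real \<Rightarrow> real" where "eta x = (if x = 0 then 0 else - (x * ln x))"

lemma H_eta: "H K p = (\<Sum>i<K. eta (p i))"
  unfolding H_def eta_def by (simp add: sum_negf[symmetric] if_distrib cong: if_cong)

lemma eta_nonneg: "0 \<le> x \<Longrightarrow> x \<le> 1 \<Longrightarrow> 0 \<le> eta x"
  unfolding eta_def by (auto simp: mult_nonneg_nonpos)

lemma eta_subadd:
  assumes "0 \<le> x" "0 \<le> d"
  shows "eta (x + d) \<le> eta x + eta d"
proof (cases "x = 0 \<or> d = 0")
  case True then show ?thesis using assms by (auto simp: eta_def)
next
  case False
  then have x: "x > 0" and d: "d > 0" using assms by auto
  have "ln x \<le> ln (x + d)" "ln d \<le> ln (x + d)" using x d by auto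
  then have "x * ln x + d * ln d \<le> x * ln (x + d) + d * ln (x + d)"
    using x d by (intro add_mono mult_left_mono) auto
  then show ?thesis using x d by (simp add: eta_def algebra_simps)
qed

lemma eta_diff_le:
  assumes "0 \<le> x" "0 \<le> d" "x + d \<le> 1"
  shows "eta x - eta (x + d) \<le> d"
proof (cases "x = 0 \<or> d = 0")
  case True
  then show ?thesis
  proof
    assume "x = 0"
    moreover have "0 \<le> eta (x + d)" using assms by (intro eta_nonneg) auto
    ultimately show ?thesis using assms by (simp add: eta_def)
  next
    assume "d = 0" then show ?thesis by simp
  qed
next
  case False
  then have x: "x > 0" and d: "d > 0" using assms by auto
  have "eta x - eta (x + d) = x * ln ((x + d) / x) + d * ln (x + d)"
    using x d by (simp add: eta_def ln_div algebra_simps)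
  also have "x * ln ((x + d) / x) = x * ln (1 + d / x)" using x by (simp add: field_simps)
  also have "\<dots> \<le> x * (d / x)" using x d by (intro mult_left_mono ln_add_one_self_le_self) auto
  also have "\<dots> = d" using x by simp
  also have "d * ln (x + d) \<le> 0" using x d assms(3) by (simp add: mult_nonneg_nonpos)
  finally show ?thesis by simp
qed

lemma d_le_eta:
  assumes "0 \<le> d" "d \<le> exp (-1)"
  shows "d \<le> eta d"
proof (cases "d = 0")
  case True then show ?thesis by (simp add: eta_def)
next
  case False
  then have "d > 0" using assms by simp
  then have "ln d \<le> -1" using assms(2) by (metis ln_exp ln_le_cancel_iff exp_gt_zero)
  then have "d * ln d \<le> d * (-1)" using \<open>d > 0\<close> by (intro mult_left_mono) auto
  then show ?thesis using \<open>d > 0\<close> by (simp add: eta_def)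
qed

lemma eta_cont:
  assumes "0 \<le> x" "x \<le> 1" "0 \<le> y" "y \<le> 1" "\<bar>x - y\<bar> \<le> exp (-1)"
  shows "\<bar>eta x - eta y\<bar> \<le> eta \<bar>x - y\<bar>"
proof -
  have main: "\<bar>eta a - eta b\<bar> \<le> eta (b - a)" if ab: "0 \<le> a" "a \<le> b" "b \<le> 1" "b - a \<le> exp (-1)" for a b
  proof -
    have 1: "eta b - eta a \<le> eta (b - a)" using eta_subadd[of a "b - a"] ab by simp
    have "eta a - eta b \<le> b - a" using eta_diff_le[of a "b - a"] ab by simp
    also have "\<dots> \<le> eta (b - a)" using d_le_eta[of "b - a"] ab by simp
    finally show ?thesis using 1 by (simp add: abs_le_iff)
  qed
  show ?thesis
  proof (cases "x \<le> y")
    case True then show ?thesis using main[of x y] assms by (simp add: abs_minus_commute)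
  next
    case False then show ?thesis using main[of y x] assms by (simp add: abs_minus_commute)
  qed
qed

lemma gibbs:
  assumes "prob K w" "K > 0"
  shows "(\<Sum>i<K. eta (w i)) \<le> ln (real K)"
proof -
  have w0: "\<forall>i. w i \<ge> 0" and w1: "(\<Sum>i<K. w i) = 1" using assms(1) by (auto simp: prob_def)
  have "eta (w i) - w i * ln (real K) \<le> 1 / real K - w i" for i
  proof (cases "w i = 0")
    case True then show ?thesis using assms(2) by (simp add: eta_def)
  next
    case False
    then have wp: "w i > 0" using w0[rule_format, of i] by linarith
    have "eta (w i) - w i * ln (real K) = w i * ln (1 / (real K * w i))"
      using wp assms(2) by (simp add: eta_def ln_div ln_mult algebra_simps)
    also have "\<dots> \<le> w i * (1 / (real K * w i) - 1)"
      using wp assms(2) by (intro mult_left_mono ln_le_minus_one) auto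
    also have "\<dots> = 1 / real K - w i" using wp assms(2) by (simp add: field_simps)
    finally show ?thesis .
  qed
  then have "(\<Sum>i<K. eta (w i) - w i * ln (real K)) \<le> (\<Sum>i<K. 1 / real K - w i)"
    by (intro sum_mono)
  also have "\<dots> = 0" using assms(2) w1 by (simp add: sum_subtractf)
  finally show ?thesis using w1 by (simp add: sum_subtractf sum_distrib_right[symmetric])
qed

lemma H_bounds:
  assumes "prob K p" "K > 0"
  shows "0 \<le> H K p" "H K p \<le> ln (real K)"
proof -
  have p0: "\<forall>i. p i \<ge> 0" and p1: "(\<Sum>i<K. p i) = 1" using assms(1) by (auto simp: prob_def)
  have "p i \<le> 1" if "i < K" for i
  proof -
    have "p i \<le> (\<Sum>j<K. p j)" using that p0 by (intro member_le_sum) auto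
    then show ?thesis using p1 by simp
  qed
  then show "0 \<le> H K p" unfolding H_eta using p0 by (intro sum_nonneg eta_nonneg) auto
  show "H K p \<le> ln (real K)" unfolding H_eta by (rule gibbs[OF assms])
qed

lemma prob_le1: "prob K p \<Longrightarrow> i < K \<Longrightarrow> p i \<le> 1"
proof -
  assume "prob K p" "i < K"
  then have "p i \<le> (\<Sum>j<K. p j)" by (intro member_le_sum) (auto simp: prob_def)
  then show ?thesis using \<open>prob K p\<close> by (simp add: prob_def)
qed

lemma eta_scale:
  assumes "t \<ge> 0" "s > 0"
  shows "eta t = s * eta (t / s) + (t / s) * eta s"
proof (cases "t = 0")
  case True then show ?thesis by (simp add: eta_def)
next
  case False
  then have "t > 0" using assms by simp
  then show ?thesis using assms by (simp add: eta_def ln_div algebra_simps)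
qed

lemma fannes:
  assumes p: "prob K p" and q: "prob K q" and K: "K > 0"
    and s: "(\<Sum>i<K. \<bar>p i - q i\<bar>) \<le> exp (-1)"
  shows "\<bar>H K p - H K q\<bar> \<le> (\<Sum>i<K. \<bar>p i - q i\<bar>) * ln (real K) + eta (\<Sum>i<K. \<bar>p i - q i\<bar>)"
proof -
  define t where "t i = \<bar>p i - q i\<bar>" for i
  define s where "s = (\<Sum>i<K. t i)"
  have ti: "t i \<le> s" if "i < K" for i unfolding s_def using that by (intro member_le_sum) (auto simp: t_def)
  have "\<bar>H K p - H K q\<bar> = \<bar>\<Sum>i<K. eta (p i) - eta (q i)\<bar>" by (simp add: H_eta sum_subtractf)
  also have "\<dots> \<le> (\<Sum>i<K. \<bar>eta (p i) - eta (q i)\<bar>)" by (rule sum_abs)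
  also have "\<dots> \<le> (\<Sum>i<K. eta (t i))"
  proof (intro sum_mono)
    fix i assume "i \<in> {..<K}"
    then have "i < K" by simp
    show "\<bar>eta (p i) - eta (q i)\<bar> \<le> eta (t i)" unfolding t_def
      using p q prob_le1[OF p \<open>i < K\<close>] prob_le1[OF q \<open>i < K\<close>] ti[OF \<open>i < K\<close>] s
      by (intro eta_cont) (auto simp: prob_def t_def s_def)
  qed
  also have "\<dots> \<le> s * ln (real K) + eta s"
  proof (cases "s = 0")
    case True
    then have "t i = 0" if "i < K" for i using ti[OF that] by (simp add: t_def)
    then show ?thesis using True by (simp add: eta_def)
  next
    case False
    have "s \<ge> 0" unfolding s_def t_def by (intro sum_nonneg) simp
    then have sp: "s > 0" using False by simp
    have "(\<Sum>i<K. eta (t i)) = (\<Sum>i<K. s * eta (t i / s) + (t i / s) * eta s)"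
      by (intro sum.cong refl eta_scale) (auto simp: t_def sp)
    also have "\<dots> = s * (\<Sum>i<K. eta (t i / s)) + eta s"
      using sp by (simp add: sum.distrib sum_distrib_left sum_distrib_right[symmetric] sum_divide_distrib[symmetric] s_def)
    also have "\<dots> \<le> s * ln (real K) + eta s"
    proof -
      have "prob K (\<lambda>i. t i / s)" unfolding prob_def using sp
        by (auto simp: t_def s_def sum_divide_distrib[symmetric])
      then have "(\<Sum>i<K. eta (t i / s)) \<le> ln (real K)" by (rule gibbs[OF _ K])
      then show ?thesis using sp by simp
    qed
    finally show ?thesis .
  qed
  finally show ?thesis unfolding s_def t_def .
qed

lemma eta_mono:
  assumes "0 \<le> a" "a \<le> b" "b \<le> exp (-1)"
  shows "eta a \<le> eta b"
proof (cases "a = 0 \<or> a = b")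
  case True
  have "exp (-1) \<le> (1::real)" by simp
  then have b1: "b \<le> 1" using assms(3) by linarith
  have "0 \<le> eta b" using assms b1 by (intro eta_nonneg) auto
  then show ?thesis using True by (auto simp: eta_def)
next
  case False
  then have a: "a > 0" and ab: "a < b" using assms by auto
  have der: "DERIV (\<lambda>x. - (x * ln x)) x :> - (ln x + 1)" if "a \<le> x" for x
  proof -
    have "x > 0" using a that by simp
    then show ?thesis by (auto intro!: derivative_eq_intros)
  qed
  obtain z where z: "a < z" "z < b" "- (b * ln b) - - (a * ln a) = (b - a) * (- (ln z + 1))"
    using MVT2[OF ab, of "\<lambda>x. - (x * ln x)" "\<lambda>x. - (ln x + 1)"] der by blast
  have "z > 0" using a z by simp
  have "ln z < -1" using z(2) assms(3) \<open>z > 0\<close> by (metis less_le_trans ln_exp ln_less_cancel_iff exp_gt_zero)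
  then have "(b - a) * (- (ln z + 1)) \<ge> 0" using ab by simp
  then show ?thesis using z(3) a ab by (simp add: eta_def)
qed

lemma poly_aux: "(1::real) + 3 * w \<le> 1.65 * exp w" if "w \<ge> 0"
proof -
  have "1 + w + w\<^sup>2 / 2 \<le> exp w" by (rule exp_lower_Taylor_quadratic[OF that])
  moreover have "1 + 3 * w \<le> 1.65 * (1 + w + w\<^sup>2 / 2)"
  proof -
    have h0: "0 \<le> (33/40) * (w - 9/11)\<^sup>2" by simp
    have h1: "(33/40) * (w - 9/11)\<^sup>2 = (33/40) * (w * w) - (27/20) * w + 2673/4840"
      by (simp add: power2_eq_square algebra_simps)
    have h2: "1.65 * (1 + w + w\<^sup>2 / 2) - (1 + 3 * w) = (33/40) * (w * w) - (27/20) * w + 13/20"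
      by (simp add: power2_eq_square algebra_simps)
    show ?thesis using h0 h1 h2 by linarith
  qed
  moreover have "1.65 * (1 + w + w\<^sup>2 / 2) \<le> 1.65 * exp w"
    using \<open>1 + w + w\<^sup>2 / 2 \<le> exp w\<close> by (rule mult_left_mono) simp
  ultimately show ?thesis by linarith
qed

lemma z_aux:
  assumes "0 < z" "z \<le> 1"
  shows "z + 3 * z * ln (1 / z) \<le> (1.65::real)"
proof -
  define w where "w = ln (1 / z)"
  have w0: "w \<ge> 0" using assms by (simp add: w_def)
  have "w = - ln z" using assms by (simp add: w_def ln_div)
  then have z: "z = exp (- w)" using assms by simp
  have "z + 3 * z * ln (1 / z) = z * (1 + 3 * w)" by (simp add: w_def algebra_simps)
  also have "\<dots> = exp (- w) * (1 + 3 * w)" using z by simp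
  also have "\<dots> \<le> exp (- w) * (1.65 * exp w)" by (intro mult_left_mono poly_aux w0) simp
  also have "\<dots> = 1.65" by (simp add: exp_minus field_simps)
  finally show ?thesis .
qed


lemma exp_m1_ge: "(0.3672::real) \<le> exp (-1)"
proof -
  have "exp 1 < (272/100::real)" by (rule e_less_272)
  then have "1 / (272/100) < 1 / exp (1::real)" by (intro divide_strict_left_mono) auto
  then show ?thesis by (simp add: exp_minus inverse_eq_divide)
qed

lemma final_num:
  fixes L x s :: real
  assumes L: "L \<ge> 2/3" and x: "0 < x" "x \<le> 1" and s: "0 \<le> s" "s \<le> 0.3672 * x\<^sup>2"
  shows "s * L + eta s \<le> x * L"
proof -
  define c :: real where "c = 0.3672"
  define z where "z = sqrt c * x"
  have c0: "c > 0" by (simp add: c_def)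
  have cz: "c * x\<^sup>2 = z\<^sup>2" by (simp add: z_def power_mult_distrib c0 less_imp_le)
  have z0: "z > 0" using x c0 by (simp add: z_def)
  have sc1: "sqrt c * 1.65 \<le> 1"
  proof -
    have "sqrt c * 1.65 = sqrt (c * 1.65\<^sup>2)" by (simp add: real_sqrt_mult)
    also have "\<dots> \<le> sqrt 1" by (intro real_sqrt_le_mono) (simp add: c_def power2_eq_square)
    finally show ?thesis by simp
  qed
  have sc: "sqrt c < 1" using sc1 c0 by (simp add: c_def)
  have z1: "z \<le> 1" unfolding z_def using sc x c0 by (intro mult_le_one) auto
  have cx1: "c * x\<^sup>2 \<le> exp (-1)"
  proof -
    have "x\<^sup>2 \<le> 1" using x by (simp add: power_le_one)
    then have "c * x\<^sup>2 \<le> c" using c0 by (simp add: mult_left_le)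
    then show ?thesis using exp_m1_ge by (simp add: c_def)
  qed
  have "s * L + eta s \<le> (c * x\<^sup>2) * L + eta (c * x\<^sup>2)"
  proof (rule add_mono)
    show "s * L \<le> c * x\<^sup>2 * L" using s L by (intro mult_right_mono) (auto simp: c_def)
    show "eta s \<le> eta (c * x\<^sup>2)" using s cx1 by (intro eta_mono) (auto simp: c_def)
  qed
  also have "eta (c * x\<^sup>2) = 2 * z\<^sup>2 * ln (1 / z)"
    unfolding cz using z0 by (simp add: eta_def ln_div ln_realpow[symmetric] power2_eq_square ln_mult)
  also have "c * x\<^sup>2 * L + 2 * z\<^sup>2 * ln (1 / z) = z * (z * L + 2 * z * ln (1 / z))"
    unfolding cz by (simp add: power2_eq_square algebra_simps)
  also have "\<dots> \<le> z * (1.65 * L)"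
  proof (rule mult_left_mono)
    have za: "z + 3 * z * ln (1 / z) \<le> 1.65" by (rule z_aux[OF z0 z1])
    have "2 * z * ln (1 / z) \<le> (2/3) * (1.65 - z)" using za by simp
    also have "\<dots> \<le> L * (1.65 - z)" using L z1 by (intro mult_right_mono) auto
    finally show "z * L + 2 * z * ln (1 / z) \<le> 1.65 * L" by (simp add: algebra_simps)
  qed (use z0 in simp)
  also have "\<dots> = (sqrt c * 1.65) * (x * L)" by (simp add: z_def)
  also have "\<dots> \<le> 1 * (x * L)" using sc1 x L by (intro mult_right_mono) auto
  finally show ?thesis by simp
qed

lemma (in prob_space) abs_integral_le_const:
  fixes h :: "'a \<Rightarrow> real"
  assumes "h \<in> borel_measurable M" "\<forall>y\<in>space M. \<bar>h y\<bar> \<le> B"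
  shows "\<bar>\<integral>y. h y \<partial>M\<bar> \<le> B"
proof -
  have int: "integrable M h"
    by (rule integrable_const_bound[where B=B]) (use assms in auto)
  have "\<bar>\<integral>y. h y \<partial>M\<bar> \<le> (\<integral>y. \<bar>h y\<bar> \<partial>M)" by (rule integral_abs_bound)
  also have "\<dots> \<le> (\<integral>y. B \<partial>M)"
    by (intro integral_mono) (use assms int in auto)
  also have "\<dots> = B" by (simp add: prob_space)
  finally show ?thesis .
qed

lemma upd_in_space:
  assumes "x \<in> space (PiM I (\<lambda>_. M))" "y \<in> space M"
  shows "x(i := y) \<in> space (PiM (insert i I) (\<lambda>_. M))"
  using assms unfolding space_PiM by (auto simp: PiE_iff extensional_def)

lemma upd_in_space2:
  assumes "x \<in> space (PiM I (\<lambda>_. M))" "y \<in> space M" "j \<in> I"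
  shows "x(j := y) \<in> space (PiM I (\<lambda>_. M))"
  using assms unfolding space_PiM by (auto simp: PiE_iff extensional_def)

lemma (in prob_space) mcdiarmid_exp:
  fixes f :: "('i \<Rightarrow> 'a) \<Rightarrow> real"
  assumes "finite I" "f \<in> borel_measurable (PiM I (\<lambda>_. M))"
    "\<forall>x\<in>space (PiM I (\<lambda>_. M)). \<bar>f x\<bar> \<le> B"
    "\<forall>x\<in>space (PiM I (\<lambda>_. M)). \<forall>i\<in>I. \<forall>y\<in>space M. \<bar>f (x(i := y)) - f x\<bar> \<le> c"
    "l > 0"
  shows "(\<integral>\<^sup>+x. ennreal (exp (l * (f x - (\<integral>x. f x \<partial>PiM I (\<lambda>_. M))))) \<partial>PiM I (\<lambda>_. M))
           \<le> ennreal (exp (l\<^sup>2 * real (card I) * c\<^sup>2 / 8))"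
  using assms
proof (induction I arbitrary: f rule: finite_induct)
  case empty
  interpret P: prob_space "PiM {} (\<lambda>_. M)" by (rule prob_space_PiM) (rule prob_space_axioms)
  have sp: "space (PiM {} (\<lambda>_. M)) = {\<lambda>_. undefined}" by (simp add: PiM_empty)
  have E: "(\<integral>x. f x \<partial>PiM {} (\<lambda>_. M)) = f (\<lambda>_. undefined)"
    by (simp add: PiM_empty lebesgue_integral_count_space_finite)
  have "(\<integral>\<^sup>+x. ennreal (exp (l * (f x - (\<integral>x. f x \<partial>PiM {} (\<lambda>_. M))))) \<partial>PiM {} (\<lambda>_. M))
      = (\<integral>\<^sup>+x. ennreal (exp (l * (f x - f (\<lambda>_. undefined)))) \<partial>count_space {\<lambda>_. undefined})"
    unfolding E by (simp add: PiM_empty)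
  also have "\<dots> = 1" by (simp add: nn_integral_count_space_finite)
  finally show ?case by simp
next
  case (insert i I)
  let ?P = "PiM I (\<lambda>_. M)"
  let ?P' = "PiM (insert i I) (\<lambda>_. M)"
  interpret PS: product_prob_space "\<lambda>_. M" by (rule product_prob_spaceI) (rule prob_space_axioms)
  interpret P: prob_space ?P by (rule prob_space_PiM) (rule prob_space_axioms)
  interpret P': prob_space ?P' by (rule prob_space_PiM) (rule prob_space_axioms)
  have fm[measurable]: "f \<in> borel_measurable ?P'" by (rule insert.prems(1))
  have fB: "\<forall>x\<in>space ?P'. \<bar>f x\<bar> \<le> B" by (rule insert.prems(2))
  have fc: "\<forall>x\<in>space ?P'. \<forall>j\<in>insert i I. \<forall>y\<in>space M. \<bar>f (x(j := y)) - f x\<bar> \<le> c" by (rule insert.prems(3))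
  have l: "l > 0" by (rule insert.prems(4))
  define g where "g x = (\<integral>y. f (x(i := y)) \<partial>M)" for x
  have fpair[measurable]: "(\<lambda>(x, y). f (x(i := y))) \<in> borel_measurable (?P \<Otimes>\<^sub>M M)"
    using measurable_add_dim[of i I "\<lambda>_. M"] fm by (simp add: measurable_compose[OF _ fm] case_prod_beta)
  have gm[measurable]: "g \<in> borel_measurable ?P"
    unfolding g_def by (rule borel_measurable_lebesgue_integral) (use fpair in simp)
  have fy_m: "(\<lambda>y. f (x(i := y))) \<in> borel_measurable M" if "x \<in> space ?P" for x
    using measurable_component_update[OF that insert.hyps(2)] fm by (rule measurable_compose)
  have fy_B: "\<forall>y\<in>space M. \<bar>f (x(i := y))\<bar> \<le> B" if "x \<in> space ?P" for x
    using fB upd_in_space[OF that] by blast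
  have fy_int: "integrable M (\<lambda>y. f (x(i := y)))" if "x \<in> space ?P" for x
    by (rule integrable_const_bound[where B=B]) (use fy_m[OF that] fy_B[OF that] in auto)
  have gB: "\<forall>x\<in>space ?P. \<bar>g x\<bar> \<le> B"
    unfolding g_def using abs_integral_le_const[OF fy_m fy_B] by blast
  have gc: "\<forall>x\<in>space ?P. \<forall>j\<in>I. \<forall>y\<in>space M. \<bar>g (x(j := y)) - g x\<bar> \<le> c"
  proof (intro ballI)
    fix x j y assume x: "x \<in> space ?P" and j: "j \<in> I" and y: "y \<in> space M"
    have xj: "x(j := y) \<in> space ?P" by (rule upd_in_space2[OF x y j])
    have ij: "i \<noteq> j" using j insert.hyps(2) by auto
    have "g (x(j := y)) - g x = (\<integral>y'. (f (x(j := y, i := y')) - f (x(i := y'))) \<partial>M)"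
      unfolding g_def by (rule Bochner_Integration.integral_diff[symmetric]) (use fy_int[OF xj] fy_int[OF x] in auto)
    also have "\<bar>\<dots>\<bar> \<le> c"
    proof (rule abs_integral_le_const)
      show "(\<lambda>y'. f (x(j := y, i := y')) - f (x(i := y'))) \<in> borel_measurable M"
        using fy_m[OF xj] fy_m[OF x] by measurable
      show "\<forall>y'\<in>space M. \<bar>f (x(j := y, i := y')) - f (x(i := y'))\<bar> \<le> c"
      proof
        fix y' assume y': "y' \<in> space M"
        have "x(j := y, i := y') = (x(i := y'))(j := y)" using ij by (simp add: fun_upd_twist)
        moreover have "x(i := y') \<in> space ?P'" by (rule upd_in_space[OF x y'])
        ultimately show "\<bar>f (x(j := y, i := y')) - f (x(i := y'))\<bar> \<le> c"
          using fc y j by auto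
      qed
    qed
    finally show "\<bar>g (x(j := y)) - g x\<bar> \<le> c" .
  qed
  have IH: "(\<integral>\<^sup>+x. ennreal (exp (l * (g x - (\<integral>x. g x \<partial>?P)))) \<partial>?P) \<le> ennreal (exp (l\<^sup>2 * real (card I) * c\<^sup>2 / 8))"
    by (rule insert.IH[OF gm gB gc l])
  have f_int: "integrable ?P' f"
    by (rule P'.integrable_const_bound[where B=B]) (use fB in auto)
  have Eg: "(\<integral>x. g x \<partial>?P) = (\<integral>x. f x \<partial>?P')"
    unfolding g_def by (rule PS.product_integral_insert[symmetric, OF insert.hyps(1,2) f_int])
  define Ef where "Ef = (\<integral>x. f x \<partial>?P')"
  have hoeff: "(\<integral>\<^sup>+y. ennreal (exp (l * (f (x(i := y)) - g x))) \<partial>M) \<le> ennreal (exp (l\<^sup>2 * c\<^sup>2 / 8))"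
    if x: "x \<in> space ?P" for x
  proof -
    define F where "F = (\<lambda>y. f (x(i := y)))"
    define a where "a = Inf (F ` space M)"
    have ne: "space M \<noteq> {}" by (rule not_empty)
    have bdd: "bdd_below (F ` space M)" using fy_B[OF x] unfolding F_def
      by (intro bdd_belowI[of _ "-B"]) (auto simp: abs_le_iff)
    have lo: "a \<le> F y" if "y \<in> space M" for y unfolding a_def using bdd that by (intro cInf_lower) auto
    have hi: "F y \<le> a + c" if y: "y \<in> space M" for y
    proof -
      have "F y - c \<le> a" unfolding a_def
      proof (rule cInf_greatest)
        show "F ` space M \<noteq> {}" using ne by simp
        fix z assume "z \<in> F ` space M"
        then obtain y' where y': "y' \<in> space M" "z = F y'" by auto
        have "x(i := y') \<in> space ?P'" by (rule upd_in_space[OF x y'(1)])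
        then have "\<bar>f ((x(i := y'))(i := y)) - f (x(i := y'))\<bar> \<le> c" using fc y by auto
        then show "F y - c \<le> z" using y' by (simp add: F_def)
      qed
      then show ?thesis by simp
    qed
    interpret IB: interval_bounded_random_variable M F a "a + c"
    proof
      show "random_variable borel F" unfolding F_def using fy_m[OF x] by simp
      show "AE y in M. F y \<in> {a..a + c}" using lo hi by auto
    qed
    have "expectation F = g x" by (simp add: F_def g_def)
    then show ?thesis using IB.Hoeffdings_lemma_nn_integral[OF l] by (simp add: F_def)
  qed
  have "(\<integral>\<^sup>+x. ennreal (exp (l * (f x - Ef))) \<partial>?P')
      = (\<integral>\<^sup>+x. (\<integral>\<^sup>+y. ennreal (exp (l * (f (x(i := y)) - Ef))) \<partial>M) \<partial>?P)"
    by (rule PS.product_nn_integral_insert[OF insert.hyps(1,2)]) measurable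
  also have "\<dots> = (\<integral>\<^sup>+x. ennreal (exp (l * (g x - Ef))) * (\<integral>\<^sup>+y. ennreal (exp (l * (f (x(i := y)) - g x))) \<partial>M) \<partial>?P)"
  proof (intro nn_integral_cong)
    fix x assume x: "x \<in> space ?P"
    have "(\<integral>\<^sup>+y. ennreal (exp (l * (f (x(i := y)) - Ef))) \<partial>M)
        = (\<integral>\<^sup>+y. ennreal (exp (l * (g x - Ef))) * ennreal (exp (l * (f (x(i := y)) - g x))) \<partial>M)"
      by (intro nn_integral_cong) (simp add: ennreal_mult[symmetric] exp_add[symmetric] algebra_simps)
    also have "\<dots> = ennreal (exp (l * (g x - Ef))) * (\<integral>\<^sup>+y. ennreal (exp (l * (f (x(i := y)) - g x))) \<partial>M)"
      by (rule nn_integral_cmult) (use fy_m[OF x] in measurable)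
    finally show "(\<integral>\<^sup>+y. ennreal (exp (l * (f (x(i := y)) - Ef))) \<partial>M)
        = ennreal (exp (l * (g x - Ef))) * (\<integral>\<^sup>+y. ennreal (exp (l * (f (x(i := y)) - g x))) \<partial>M)" .
  qed
  also have "\<dots> \<le> (\<integral>\<^sup>+x. ennreal (exp (l * (g x - Ef))) * ennreal (exp (l\<^sup>2 * c\<^sup>2 / 8)) \<partial>?P)"
    by (intro nn_integral_mono mult_left_mono hoeff) auto
  also have "\<dots> = (\<integral>\<^sup>+x. ennreal (exp (l * (g x - Ef))) \<partial>?P) * ennreal (exp (l\<^sup>2 * c\<^sup>2 / 8))"
    by (rule nn_integral_multc) measurable
  also have "\<dots> \<le> ennreal (exp (l\<^sup>2 * real (card I) * c\<^sup>2 / 8)) * ennreal (exp (l\<^sup>2 * c\<^sup>2 / 8))"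
    using IH unfolding Eg Ef_def[symmetric] by (intro mult_right_mono) auto
  also have "\<dots> = ennreal (exp (l\<^sup>2 * real (card (insert i I)) * c\<^sup>2 / 8))"
    using insert.hyps by (simp add: ennreal_mult[symmetric] exp_add[symmetric] algebra_simps add_divide_distrib)
  finally show ?case unfolding Ef_def .
qed


lemma (in prob_space) mcdiarmid_tail:
  fixes f :: "('i \<Rightarrow> 'a) \<Rightarrow> real"
  assumes I: "finite I" "card I > 0" and fm: "f \<in> borel_measurable (PiM I (\<lambda>_. M))"
    and fB: "\<forall>x\<in>space (PiM I (\<lambda>_. M)). \<bar>f x\<bar> \<le> B"
    and fc: "\<forall>x\<in>space (PiM I (\<lambda>_. M)). \<forall>i\<in>I. \<forall>y\<in>space M. \<bar>f (x(i := y)) - f x\<bar> \<le> c"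
    and c: "c > 0" and t: "t > 0"
  shows "measure (PiM I (\<lambda>_. M)) {x \<in> space (PiM I (\<lambda>_. M)). f x - (\<integral>x. f x \<partial>PiM I (\<lambda>_. M)) \<ge> t}
           \<le> exp (- 2 * t\<^sup>2 / (real (card I) * c\<^sup>2))"
proof -
  let ?P = "PiM I (\<lambda>_. M)"
  interpret P: prob_space ?P by (rule prob_space_PiM) (rule prob_space_axioms)
  define K where "K = real (card I)"
  have K0: "K > 0" using I by (simp add: K_def)
  define Ef where "Ef = (\<integral>x. f x \<partial>?P)"
  define l where "l = 4 * t / (K * c\<^sup>2)"
  have l0: "l > 0" using K0 c t by (simp add: l_def)
  define S where "S = {x \<in> space ?P. f x - Ef \<ge> t}"
  have Sm: "S \<in> sets ?P" unfolding S_def using fm by measurable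
  have "emeasure ?P S = (\<integral>\<^sup>+x. indicator S x \<partial>?P)" using Sm by simp
  also have "\<dots> \<le> (\<integral>\<^sup>+x. ennreal (exp (- (l * t))) * ennreal (exp (l * (f x - Ef))) \<partial>?P)"
  proof (intro nn_integral_mono)
    fix x assume x: "x \<in> space ?P"
    show "indicator S x \<le> ennreal (exp (- (l * t))) * ennreal (exp (l * (f x - Ef)))"
    proof (cases "x \<in> S")
      case True
      then have "l * t \<le> l * (f x - Ef)" using l0 by (simp add: S_def)
      then have "1 \<le> exp (- (l * t)) * exp (l * (f x - Ef))" by (simp add: exp_add[symmetric])
      then show ?thesis using True by (simp add: ennreal_mult[symmetric])
    qed simp
  qed
  also have "\<dots> = ennreal (exp (- (l * t))) * (\<integral>\<^sup>+x. ennreal (exp (l * (f x - Ef))) \<partial>?P)"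
    by (rule nn_integral_cmult) (use fm in measurable)
  also have "\<dots> \<le> ennreal (exp (- (l * t))) * ennreal (exp (l\<^sup>2 * K * c\<^sup>2 / 8))"
    using mcdiarmid_exp[OF I(1) fm fB fc l0] unfolding Ef_def K_def by (intro mult_left_mono) auto
  also have "\<dots> = ennreal (exp (- 2 * t\<^sup>2 / (K * c\<^sup>2)))"
  proof -
    have "- (l * t) + l\<^sup>2 * K * c\<^sup>2 / 8 = - 2 * t\<^sup>2 / (K * c\<^sup>2)"
      using K0 c by (simp add: l_def power2_eq_square field_simps)
    then show ?thesis by (simp add: ennreal_mult[symmetric] exp_add[symmetric])
  qed
  finally have "emeasure ?P S \<le> ennreal (exp (- 2 * t\<^sup>2 / (K * c\<^sup>2)))" .
  then show ?thesis unfolding S_def[symmetric] Ef_def[symmetric] K_def[symmetric]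
    by (simp add: P.emeasure_eq_measure)
qed

lemma (in prob_space) PiM_integral_comp:
  fixes h :: "'a \<Rightarrow> real"
  assumes "m \<in> I" "h \<in> borel_measurable M"
  shows "(\<integral>\<omega>. h (\<omega> m) \<partial>PiM I (\<lambda>_. M)) = (\<integral>z. h z \<partial>M)"
proof -
  have "distr (PiM I (\<lambda>_. M)) M (\<lambda>\<omega>. \<omega> m) = M"
    by (rule distr_PiM_component) (use assms prob_space_axioms in auto)
  then have "(\<integral>z. h z \<partial>M) = (\<integral>z. h z \<partial>distr (PiM I (\<lambda>_. M)) M (\<lambda>\<omega>. \<omega> m))" by simp
  also have "\<dots> = (\<integral>\<omega>. h (\<omega> m) \<partial>PiM I (\<lambda>_. M))"
    by (rule integral_distr) (use assms in auto)
  finally show ?thesis by simp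
qed

lemma (in prob_space) PiM_integral_pair:
  fixes h1 h2 :: "'a \<Rightarrow> real"
  assumes I: "finite I" "m \<in> I" "m' \<in> I" "m \<noteq> m'" and h: "integrable M h1" "integrable M h2"
  shows "(\<integral>\<omega>. h1 (\<omega> m) * h2 (\<omega> m') \<partial>PiM I (\<lambda>_. M)) = (\<integral>z. h1 z \<partial>M) * (\<integral>z. h2 z \<partial>M)"
proof -
  interpret PS: product_prob_space "\<lambda>_. M" by (rule product_prob_spaceI) (rule prob_space_axioms)
  define F where "F j = (if j = m then h1 else if j = m' then h2 else (\<lambda>_. 1::real))" for j
  have int: "integrable M (F j)" for j using h by (simp add: F_def)
  have prodF: "(\<Prod>j\<in>I. F j (\<omega> j)) = h1 (\<omega> m) * h2 (\<omega> m')" for \<omega>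
  proof -
    have "(\<Prod>j\<in>I. F j (\<omega> j)) = F m (\<omega> m) * (\<Prod>j\<in>I - {m}. F j (\<omega> j))"
      using I by (simp add: prod.remove)
    also have "(\<Prod>j\<in>I - {m}. F j (\<omega> j)) = F m' (\<omega> m') * (\<Prod>j\<in>I - {m} - {m'}. F j (\<omega> j))"
      using I by (intro prod.remove) auto
    also have "(\<Prod>j\<in>I - {m} - {m'}. F j (\<omega> j)) = 1"
      by (intro prod.neutral) (auto simp: F_def)
    finally show ?thesis using I by (simp add: F_def)
  qed
  have "(\<integral>\<omega>. (\<Prod>j\<in>I. F j (\<omega> j)) \<partial>PiM I (\<lambda>_. M)) = (\<Prod>j\<in>I. integral\<^sup>L M (F j))"
    by (rule PS.product_integral_prod[OF I(1) int])
  also have "\<dots> = integral\<^sup>L M (F m) * (\<Prod>j\<in>I - {m}. integral\<^sup>L M (F j))"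
    using I by (simp add: prod.remove)
  also have "(\<Prod>j\<in>I - {m}. integral\<^sup>L M (F j)) = integral\<^sup>L M (F m') * (\<Prod>j\<in>I - {m} - {m'}. integral\<^sup>L M (F j))"
    using I by (intro prod.remove) auto
  also have "(\<Prod>j\<in>I - {m} - {m'}. integral\<^sup>L M (F j)) = 1"
    by (intro prod.neutral) (auto simp: F_def prob_space)
  finally show ?thesis unfolding prodF using I by (simp add: F_def)
qed


lemma (in prob_space) sq_integral_le:
  fixes f :: "'a \<Rightarrow> real"
  assumes "integrable M f" "integrable M (\<lambda>x. (f x)\<^sup>2)"
  shows "(\<integral>x. f x \<partial>M)\<^sup>2 \<le> (\<integral>x. (f x)\<^sup>2 \<partial>M)"
proof -
  define c where "c = (\<integral>x. f x \<partial>M)"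
  have "0 \<le> (\<integral>x. (f x - c)\<^sup>2 \<partial>M)" by simp
  also have "(\<integral>x. (f x - c)\<^sup>2 \<partial>M) = (\<integral>x. (f x)\<^sup>2 - 2 * c * f x + c\<^sup>2 \<partial>M)"
    by (simp add: power2_diff algebra_simps)
  also have "\<dots> = (\<integral>x. (f x)\<^sup>2 \<partial>M) - 2 * c * c + c\<^sup>2"
    using assms by (simp add: c_def prob_space)
  finally show ?thesis by (simp add: c_def power2_eq_square)
qed

lemma (in prob_space) mean_norm_bound:
  fixes Y :: "'a \<Rightarrow> 'b \<Rightarrow> real"
  assumes T: "finite T" and n: "n > 0"
    and Ym: "\<And>i. i \<in> T \<Longrightarrow> (\<lambda>z. Y z i) \<in> borel_measurable M"
    and Y1: "\<forall>z\<in>space M. (\<Sum>i\<in>T. (Y z i)\<^sup>2) \<le> 1"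
  shows "(\<integral>\<omega>. sqrt (\<Sum>i\<in>T. ((1 / real n) * (\<Sum>m<n. Y (\<omega> m) i) - (\<integral>z. Y z i \<partial>M))\<^sup>2) \<partial>PiM {0..<n} (\<lambda>_. M))
           \<le> 1 / sqrt (real n)"
proof -
  let ?P = "PiM {0..<n} (\<lambda>_. M)"
  interpret P: prob_space ?P by (rule prob_space_PiM) (rule prob_space_axioms)
  define mu where "mu i = (\<integral>z. Y z i \<partial>M)" for i
  have Yb: "\<bar>Y z i\<bar> \<le> 1" if "z \<in> space M" "i \<in> T" for z i
  proof -
    have "(Y z i)\<^sup>2 \<le> (\<Sum>i\<in>T. (Y z i)\<^sup>2)" using T that by (intro member_le_sum) auto
    then have "(Y z i)\<^sup>2 \<le> 1" using Y1 that by auto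
    then show ?thesis by (simp add: abs_square_le_1)
  qed
  have Yint: "integrable M (\<lambda>z. Y z i)" if "i \<in> T" for i
    by (rule integrable_const_bound[where B=1]) (use Yb Ym that in auto)
  have Y2int: "integrable M (\<lambda>z. (Y z i)\<^sup>2)" if "i \<in> T" for i
  proof (rule integrable_const_bound[where B=1])
    show "AE x in M. norm ((Y x i)\<^sup>2) \<le> 1" using Yb that by (auto simp: abs_square_le_1)
  qed (use Ym that in measurable)
  define h where "h i z = Y z i - mu i" for i z
  have hm: "h i \<in> borel_measurable M" if "i \<in> T" for i unfolding h_def using Ym[OF that] by measurable
  have hint: "integrable M (h i)" if "i \<in> T" for i unfolding h_def using Yint[OF that] by simp
  have h0: "(\<integral>z. h i z \<partial>M) = 0" if "i \<in> T" for i
    unfolding h_def using Yint[OF that] by (simp add: mu_def prob_space)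
  have h2int: "integrable M (\<lambda>z. (h i z)\<^sup>2)" if "i \<in> T" for i
    unfolding h_def power2_diff using Y2int[OF that] Yint[OF that] by simp
  define V where "V i = (\<integral>z. (h i z)\<^sup>2 \<partial>M)" for i
  have V_le: "V i \<le> (\<integral>z. (Y z i)\<^sup>2 \<partial>M)" if "i \<in> T" for i
  proof -
    have "V i = (\<integral>z. (Y z i)\<^sup>2 - 2 * mu i * Y z i + (mu i)\<^sup>2 \<partial>M)"
      unfolding V_def h_def by (simp add: power2_diff algebra_simps)
    also have "\<dots> = (\<integral>z. (Y z i)\<^sup>2 \<partial>M) - 2 * mu i * mu i + (mu i)\<^sup>2"
      using Y2int[OF that] Yint[OF that] by (simp add: mu_def prob_space)
    finally show ?thesis by (simp add: power2_eq_square)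
  qed
  have sumV: "(\<Sum>i\<in>T. V i) \<le> 1"
  proof -
    have "(\<Sum>i\<in>T. V i) \<le> (\<Sum>i\<in>T. \<integral>z. (Y z i)\<^sup>2 \<partial>M)" by (intro sum_mono V_le)
    also have "\<dots> = (\<integral>z. (\<Sum>i\<in>T. (Y z i)\<^sup>2) \<partial>M)"
      by (rule Bochner_Integration.integral_sum[symmetric]) (use Y2int in auto)
    also have "\<dots> \<le> (\<integral>z. 1 \<partial>M)"
      by (intro integral_mono) (use Y2int Y1 in auto)
    finally show ?thesis by (simp add: prob_space)
  qed
  define Z where "Z m i \<omega> = h i (\<omega> m)" for m i and \<omega> :: "nat \<Rightarrow> 'a"
  have Zm: "Z m i \<in> borel_measurable ?P" if "m < n" "i \<in> T" for m i
  proof -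
    have m: "m \<in> {0..<n}" using that by simp
    show ?thesis unfolding Z_def
      using measurable_compose[OF measurable_component_singleton[OF m] hm[OF that(2)]] by simp
  qed
  have Zb: "\<bar>Z m i \<omega>\<bar> \<le> 2" if "m < n" "i \<in> T" "\<omega> \<in> space ?P" for m i \<omega>
  proof -
    have om: "\<omega> m \<in> space M" using that by (auto simp: space_PiM PiE_iff)
    have "\<bar>mu i\<bar> \<le> 1" unfolding mu_def using abs_integral_le_const[OF Ym[OF that(2)]] Yb that(2) by blast
    then show ?thesis using Yb[OF om that(2)] by (simp add: Z_def h_def)
  qed
  define g where "g \<omega> = (\<Sum>i\<in>T. ((1 / real n) * (\<Sum>m<n. Y (\<omega> m) i) - mu i)\<^sup>2)" for \<omega>
  have g_eq: "g \<omega> = (\<Sum>i\<in>T. (1 / (real n)\<^sup>2) * (\<Sum>m<n. \<Sum>m'<n. Z m i \<omega> * Z m' i \<omega>))" for \<omega>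
  proof -
    have "(1 / real n) * (\<Sum>m<n. Y (\<omega> m) i) - mu i = (1 / real n) * (\<Sum>m<n. Z m i \<omega>)" for i
      using n by (simp add: Z_def h_def sum_subtractf field_simps)
    then show ?thesis unfolding g_def
      by (simp add: power2_eq_square sum_product mult_ac)
  qed
  have ZZint: "integrable ?P (\<lambda>\<omega>. Z m i \<omega> * Z m' i \<omega>)" if "m < n" "m' < n" "i \<in> T" for m m' i
  proof (rule P.integrable_const_bound[where B=4])
    show "AE x in ?P. norm (Z m i x * Z m' i x) \<le> 4"
    proof (rule AE_I2)
      fix x assume x: "x \<in> space ?P"
      have "\<bar>Z m i x\<bar> * \<bar>Z m' i x\<bar> \<le> 2 * 2"
        by (rule mult_mono) (use Zb[OF that(1,3) x] Zb[OF that(2,3) x] in auto)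
      then show "norm (Z m i x * Z m' i x) \<le> 4" by (simp add: abs_mult)
    qed
  qed (use Zm[OF that(1,3)] Zm[OF that(2,3)] in measurable)
  have EZZ: "(\<integral>\<omega>. Z m i \<omega> * Z m' i \<omega> \<partial>?P) = (if m = m' then V i else 0)" if "m < n" "m' < n" "i \<in> T" for m m' i
  proof (cases "m = m'")
    case True
    then have "(\<integral>\<omega>. Z m i \<omega> * Z m' i \<omega> \<partial>?P) = (\<integral>\<omega>. (\<lambda>z. (h i z)\<^sup>2) (\<omega> m) \<partial>?P)"
      by (simp add: Z_def power2_eq_square)
    also have "\<dots> = V i" unfolding V_def
      by (rule PiM_integral_comp) (use that hm in auto)
    finally show ?thesis using True by simp
  next
    case False
    have "(\<integral>\<omega>. Z m i \<omega> * Z m' i \<omega> \<partial>?P) = (\<integral>z. h i z \<partial>M) * (\<integral>z. h i z \<partial>M)"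
      unfolding Z_def by (rule PiM_integral_pair) (use that False hint in auto)
    then show ?thesis using h0[OF that(3)] False by simp
  qed
  have gint: "integrable ?P g"
    unfolding g_eq using ZZint by (auto intro!: Bochner_Integration.integrable_sum)
  have Eg: "(\<integral>\<omega>. g \<omega> \<partial>?P) \<le> 1 / real n"
  proof -
    have "(\<integral>\<omega>. g \<omega> \<partial>?P) = (\<Sum>i\<in>T. (1 / (real n)\<^sup>2) * (\<Sum>m<n. \<Sum>m'<n. \<integral>\<omega>. Z m i \<omega> * Z m' i \<omega> \<partial>?P))"
    proof -
      have inner: "(\<integral>\<omega>. (\<Sum>m<n. \<Sum>m'<n. Z m i \<omega> * Z m' i \<omega>) \<partial>?P)
          = (\<Sum>m<n. \<Sum>m'<n. \<integral>\<omega>. Z m i \<omega> * Z m' i \<omega> \<partial>?P)" if i: "i \<in> T" for i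
      proof -
        have "(\<integral>\<omega>. (\<Sum>m<n. \<Sum>m'<n. Z m i \<omega> * Z m' i \<omega>) \<partial>?P)
            = (\<Sum>m<n. \<integral>\<omega>. (\<Sum>m'<n. Z m i \<omega> * Z m' i \<omega>) \<partial>?P)"
          by (rule Bochner_Integration.integral_sum) (auto intro!: Bochner_Integration.integrable_sum ZZint i)
        also have "\<dots> = (\<Sum>m<n. \<Sum>m'<n. \<integral>\<omega>. Z m i \<omega> * Z m' i \<omega> \<partial>?P)"
          by (intro sum.cong refl Bochner_Integration.integral_sum) (auto intro!: ZZint i)
        finally show ?thesis .
      qed
      have "(\<integral>\<omega>. g \<omega> \<partial>?P) = (\<Sum>i\<in>T. \<integral>\<omega>. (1 / (real n)\<^sup>2) * (\<Sum>m<n. \<Sum>m'<n. Z m i \<omega> * Z m' i \<omega>) \<partial>?P)"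
        unfolding g_eq
        by (rule Bochner_Integration.integral_sum) (auto intro!: Bochner_Integration.integrable_sum ZZint)
      also have "\<dots> = (\<Sum>i\<in>T. (1 / (real n)\<^sup>2) * (\<integral>\<omega>. (\<Sum>m<n. \<Sum>m'<n. Z m i \<omega> * Z m' i \<omega>) \<partial>?P))"
        by (intro sum.cong refl Bochner_Integration.integral_mult_right_zero)
      also have "\<dots> = (\<Sum>i\<in>T. (1 / (real n)\<^sup>2) * (\<Sum>m<n. \<Sum>m'<n. \<integral>\<omega>. Z m i \<omega> * Z m' i \<omega> \<partial>?P))"
        by (intro sum.cong refl) (simp add: inner)
      finally show ?thesis .
    qed
    also have "\<dots> = (\<Sum>i\<in>T. (1 / (real n)\<^sup>2) * (\<Sum>m<n. V i))"
    proof (rule sum.cong[OF refl])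
      fix i assume i: "i \<in> T"
      have "(\<Sum>m<n. \<Sum>m'<n. \<integral>\<omega>. Z m i \<omega> * Z m' i \<omega> \<partial>?P) = (\<Sum>m<n. V i)"
      proof (rule sum.cong[OF refl])
        fix m assume m: "m \<in> {..<n}"
        have "(\<Sum>m'<n. \<integral>\<omega>. Z m i \<omega> * Z m' i \<omega> \<partial>?P) = (\<Sum>m'<n. if m = m' then V i else 0)"
          by (intro sum.cong refl) (use m i EZZ in auto)
        also have "\<dots> = V i" using m by simp
        finally show "(\<Sum>m'<n. \<integral>\<omega>. Z m i \<omega> * Z m' i \<omega> \<partial>?P) = V i" .
      qed
      then show "(1 / (real n)\<^sup>2) * (\<Sum>m<n. \<Sum>m'<n. \<integral>\<omega>. Z m i \<omega> * Z m' i \<omega> \<partial>?P) = (1 / (real n)\<^sup>2) * (\<Sum>m<n. V i)"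
        by simp
    qed
    also have "\<dots> = (1 / real n) * (\<Sum>i\<in>T. V i)"
      using n by (simp add: sum_distrib_left power2_eq_square)
    also have "\<dots> \<le> 1 / real n" using sumV n by (simp add: divide_right_mono)
    finally show ?thesis .
  qed
  have g0: "g \<omega> \<ge> 0" for \<omega> unfolding g_def by (intro sum_nonneg) simp
  have gm: "g \<in> borel_measurable ?P" using gint by auto
  have gB: "\<bar>sqrt (g \<omega>)\<bar> \<le> sqrt (4 * real (card T))" if "\<omega> \<in> space ?P" for \<omega>
  proof -
    have "g \<omega> \<le> (\<Sum>i\<in>T. 4)"
    proof (unfold g_def, intro sum_mono)
      fix i assume i: "i \<in> T"
      have eq: "(1 / real n) * (\<Sum>m<n. Y (\<omega> m) i) - mu i = (1 / real n) * (\<Sum>m<n. Z m i \<omega>)"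
        using n by (simp add: Z_def h_def sum_subtractf field_simps)
      have "\<bar>\<Sum>m<n. Z m i \<omega>\<bar> \<le> (\<Sum>m<n. \<bar>Z m i \<omega>\<bar>)" by (rule sum_abs)
      also have "\<dots> \<le> (\<Sum>m<n. 2)" by (intro sum_mono Zb) (use i that in auto)
      finally have "\<bar>\<Sum>m<n. Z m i \<omega>\<bar> \<le> 2 * real n" by simp
      then have "\<bar>(1 / real n) * (\<Sum>m<n. Z m i \<omega>)\<bar> \<le> 2"
        using n by (simp add: abs_mult field_simps)
      then have "\<bar>(1 / real n) * (\<Sum>m<n. Y (\<omega> m) i) - mu i\<bar> \<le> 2" unfolding eq .
      then have "\<bar>(1 / real n) * (\<Sum>m<n. Y (\<omega> m) i) - mu i\<bar>\<^sup>2 \<le> 2\<^sup>2"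
        by (intro power_mono) auto
      then show "((1 / real n) * (\<Sum>m<n. Y (\<omega> m) i) - mu i)\<^sup>2 \<le> 4" by simp
    qed
    then show ?thesis using g0 by simp
  qed
  have fint: "integrable ?P (\<lambda>\<omega>. sqrt (g \<omega>))"
    by (rule P.integrable_const_bound[where B="sqrt (4 * real (card T))"]) (use gB gm in auto)
  have "(\<integral>\<omega>. sqrt (g \<omega>) \<partial>?P)\<^sup>2 \<le> (\<integral>\<omega>. (sqrt (g \<omega>))\<^sup>2 \<partial>?P)"
    by (rule P.sq_integral_le[OF fint]) (use gint g0 in simp)
  also have "\<dots> = (\<integral>\<omega>. g \<omega> \<partial>?P)" using g0 by simp
  also have "\<dots> \<le> 1 / real n" by (rule Eg)
  finally have "(\<integral>\<omega>. sqrt (g \<omega>) \<partial>?P)\<^sup>2 \<le> 1 / real n" .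
  then have "\<bar>\<integral>\<omega>. sqrt (g \<omega>) \<partial>?P\<bar> \<le> sqrt (1 / real n)" by (metis real_sqrt_abs real_sqrt_le_mono)
  then show ?thesis unfolding g_def mu_def by (simp add: real_sqrt_divide)
qed

definition mrg :: "nat set \<Rightarrow> (nat \<Rightarrow> nat) \<Rightarrow> (nat \<Rightarrow> nat) \<Rightarrow> nat \<Rightarrow> nat" where
  "mrg J r c = (\<lambda>n. if n \<in> J then r n else c n)"

lemma mrg_bij:
  assumes J: "J \<subseteq> {0..<K}"
  shows "bij_betw (\<lambda>(r, c). mrg J r c) (mat_rows K D J \<times> mat_cols K D J) (tidx K D)"
proof (rule bij_betwI')
  fix x y assume x: "x \<in> mat_rows K D J \<times> mat_cols K D J" and y: "y \<in> mat_rows K D J \<times> mat_cols K D J"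
  obtain r c where xrc: "x = (r, c)" by (cases x)
  obtain r' c' where yrc: "y = (r', c')" by (cases y)
  have r: "r \<in> PiE J (\<lambda>n. {0..<D n})" and c: "c \<in> PiE ({0..<K} - J) (\<lambda>n. {0..<D n})"
    using x xrc by (auto simp: mat_rows_def mat_cols_def)
  have r': "r' \<in> PiE J (\<lambda>n. {0..<D n})" and c': "c' \<in> PiE ({0..<K} - J) (\<lambda>n. {0..<D n})"
    using y yrc by (auto simp: mat_rows_def mat_cols_def)
  show "((\<lambda>(r, c). mrg J r c) x = (\<lambda>(r, c). mrg J r c) y) = (x = y)"
  proof
    assume eq: "(\<lambda>(r, c). mrg J r c) x = (\<lambda>(r, c). mrg J r c) y"
    then have e: "mrg J r c n = mrg J r' c' n" for n using xrc yrc by simp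
    have "r = r'"
    proof
      fix n show "r n = r' n"
        using e[of n] r r' by (cases "n \<in> J") (auto simp: mrg_def PiE_def extensional_def)
    qed
    moreover have "c = c'"
    proof
      fix n show "c n = c' n"
        using e[of n] c c' J by (cases "n \<in> J") (auto simp: mrg_def PiE_def extensional_def)
    qed
    ultimately show "x = y" using xrc yrc by simp
  qed simp
next
  fix x assume x: "x \<in> mat_rows K D J \<times> mat_cols K D J"
  obtain r c where xrc: "x = (r, c)" by (cases x)
  have r: "r \<in> PiE J (\<lambda>n. {0..<D n})" and c: "c \<in> PiE ({0..<K} - J) (\<lambda>n. {0..<D n})"
    using x xrc by (auto simp: mat_rows_def mat_cols_def)
  show "(\<lambda>(r, c). mrg J r c) x \<in> tidx K D"
    using r c J xrc unfolding tidx_def mrg_def by (auto simp: PiE_iff extensional_def)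
next
  fix i assume i: "i \<in> tidx K D"
  define r where "r = restrict i J"
  define c where "c = restrict i ({0..<K} - J)"
  have "(r, c) \<in> mat_rows K D J \<times> mat_cols K D J"
    using i J unfolding r_def c_def mat_rows_def mat_cols_def tidx_def by (auto simp: PiE_iff)
  moreover have "i = (\<lambda>(r, c). mrg J r c) (r, c)"
  proof -
    have "i n = mrg J r c n" for n
      using i J unfolding r_def c_def mrg_def tidx_def by (auto simp: PiE_iff extensional_def)
    then show ?thesis by auto
  qed
  ultimately show "\<exists>x\<in>mat_rows K D J \<times> mat_cols K D J. i = (\<lambda>(r, c). mrg J r c) x" by blast
qed

lemma finite_rows: "finite J \<Longrightarrow> finite (mat_rows K D J)"
  unfolding mat_rows_def by (intro finite_PiE) auto

lemma finite_cols: "finite (mat_cols K D J)"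
  unfolding mat_cols_def by (intro finite_PiE) auto

lemma finite_tidx: "finite (tidx K D)"
  unfolding tidx_def by (intro finite_PiE) auto

lemma finner_mat_arr:
  assumes J: "J \<subseteq> {0..<K}"
  shows "finner (mat_rows K D J) (mat_cols K D J) (mat_arr J X) (mat_arr J Y) = (\<Sum>i\<in>tidx K D. X i * Y i)"
proof -
  have fJ: "finite J" using J finite_subset by blast
  have "finner (mat_rows K D J) (mat_cols K D J) (mat_arr J X) (mat_arr J Y)
      = (\<Sum>z\<in>mat_rows K D J \<times> mat_cols K D J. (\<lambda>i. X i * Y i) ((\<lambda>(r, c). mrg J r c) z))"
    unfolding finner_def mat_arr_def mrg_def
    by (simp add: sum.cartesian_product case_prod_beta)
  also have "\<dots> = (\<Sum>i\<in>tidx K D. X i * Y i)"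
    by (rule sum.reindex_bij_betw[OF mrg_bij[OF J]])
  finally show ?thesis .
qed

lemma card_rows: "finite J \<Longrightarrow> card (mat_rows K D J) = (\<Prod>n\<in>J. D n)"
  unfolding mat_rows_def by (simp add: card_PiE)

lemma card_cols: "card (mat_cols K D J) = (\<Prod>n\<in>{0..<K} - J. D n)"
  unfolding mat_cols_def by (simp add: card_PiE)

lemma DJ_card:
  assumes "J \<subseteq> {0..<K}"
  shows "DJ K D J = min (card (mat_rows K D J)) (card (mat_cols K D J))"
  using assms finite_subset[OF assms] by (simp add: DJ_def card_rows card_cols)

lemma DJ_pos:
  assumes "J \<subseteq> {0..<K}" "\<And>n. n < K \<Longrightarrow> D n > 0"
  shows "DJ K D J > 0"
proof -
  have "(\<Prod>n\<in>J. D n) > 0" using assms by (intro prod_pos) auto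
  moreover have "(\<Prod>n\<in>{0..<K} - J. D n) > 0" using assms by (intro prod_pos) auto
  ultimately show ?thesis by (simp add: DJ_def)
qed

lemma QE_mat_zero:
  assumes "finite R" "finite C" "finner R C A A = 0"
  shows "QE_mat R C A = 0"
proof -
  obtain k \<sigma> u v where s: "is_svd R C A k \<sigma> u v" using svd_exists[OF assms(1,2)] by blast
  have "(\<Sum>s\<in>#singular_values R C A. s\<^sup>2) = finner R C A A"
    unfolding sv_char[OF s] finner_self_svd[OF s] sum_mset_sv by simp
  then show ?thesis using assms(3) by (simp add: QE_mat_def Let_def)
qed

lemma QE_mat_bounds:
  assumes "finite R" "finite C" "min (card R) (card C) > 0"
  shows "0 \<le> QE_mat R C A \<and> QE_mat R C A \<le> ln (real (min (card R) (card C)))"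
proof (cases "finner R C A A = 0")
  case True
  then show ?thesis using QE_mat_zero[OF assms(1,2)] assms(3) by simp
next
  case False
  then have t: "finner R C A A > 0" using finner_nonneg[of R C A] by simp
  obtain k \<sigma> u v where s: "is_svd R C A k \<sigma> u v" using svd_exists[OF assms(1,2)] by blast
  show ?thesis unfolding QE_char[OF assms(1,2) s t]
    using H_bounds[OF prob_of_svd[OF assms(1,2) s t] assms(3)] by simp
qed


lemma det:
  fixes A B :: "(nat \<Rightarrow> nat) \<Rightarrow> real"
  assumes J: "J \<subseteq> {0..<K}" and Dpos: "\<And>n. n < K \<Longrightarrow> D n > 0"
    and eps: "tnorm K D B > 0" and gam: "\<gamma> > 0"
    and KJL: "ln (real (DJ K D J)) \<le> L"
    and close: "\<gamma> < L \<Longrightarrow> sqrt (\<Sum>i\<in>tidx K D. (A i - B i)\<^sup>2) \<le> 0.167 * (\<gamma> / L)\<^sup>2 * tnorm K D B"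
  shows "\<bar>QE K D A J - QE K D B J\<bar> \<le> \<gamma>"
proof -
  define R where "R = mat_rows K D J"
  define C where "C = mat_cols K D J"
  define KJ where "KJ = DJ K D J"
  define Aj where "Aj = mat_arr J A"
  define Bj where "Bj = mat_arr J B"
  have fJ: "finite J" using J finite_subset by blast
  have fR: "finite R" and fC: "finite C" using fJ by (simp_all add: R_def C_def finite_rows finite_cols)
  have KJc: "KJ = min (card R) (card C)" unfolding KJ_def R_def C_def by (rule DJ_card[OF J])
  have KJ0: "KJ > 0" unfolding KJ_def by (rule DJ_pos[OF J Dpos])
  have QA: "QE K D A J = QE_mat R C Aj" by (simp add: QE_def R_def C_def Aj_def)
  have QB: "QE K D B J = QE_mat R C Bj" by (simp add: QE_def R_def C_def Bj_def)
  have bA: "0 \<le> QE_mat R C Aj \<and> QE_mat R C Aj \<le> ln (real KJ)"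
    using QE_mat_bounds[OF fR fC] KJ0 KJc by simp
  have bB: "0 \<le> QE_mat R C Bj \<and> QE_mat R C Bj \<le> ln (real KJ)"
    using QE_mat_bounds[OF fR fC] KJ0 KJc by simp
  show ?thesis
  proof (cases "ln (real KJ) \<le> \<gamma>")
    case True
    then show ?thesis using bA bB QA QB by (simp add: abs_le_iff)
  next
    case False
    then have gl: "\<gamma> < ln (real KJ)" by simp
    then have gL: "\<gamma> < L" using KJL by (simp add: KJ_def)
    have "ln (real KJ) > 0" using gl gam by simp
    then have "real KJ > 1" using KJ0 by (simp add: ln_gt_zero_iff)
    then have "real KJ \<ge> 2" by simp
    then have "ln (real KJ) \<ge> ln 2" by simp
    then have L23: "L \<ge> 2/3" using ln2_ge_two_thirds KJL by (simp add: KJ_def)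
    define x where "x = \<gamma> / L"
    have x0: "0 < x" and x1: "x \<le> 1" using gam gL by (simp_all add: x_def)
    define \<epsilon> where "\<epsilon> = tnorm K D B"
    define d where "d = sqrt (\<Sum>i\<in>tidx K D. (A i - B i)\<^sup>2)"
    define q where "q = 0.167 * x\<^sup>2"
    have q0: "0 \<le> q" and q1: "q \<le> 0.167" using x0 x1 by (simp_all add: q_def power_le_one)
    have dq: "d \<le> q * \<epsilon>" using close[OF gL] by (simp add: d_def q_def x_def \<epsilon>_def)
    have e0: "\<epsilon> > 0" using eps by (simp add: \<epsilon>_def)
    have d0: "0 \<le> d" by (simp add: d_def sum_nonneg)
    have "q * \<epsilon> \<le> 0.167 * \<epsilon>" by (rule mult_right_mono) (use q1 e0 in auto)
    then have dq2: "d \<le> 0.167 * \<epsilon>" using dq by linarith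
    moreover have "0.167 * \<epsilon> < \<epsilon>" using e0 by simp
    ultimately have de: "d < \<epsilon>" by linarith
    have fBB: "finner R C Bj Bj = \<epsilon>\<^sup>2"
    proof -
      have "finner R C Bj Bj = (\<Sum>i\<in>tidx K D. B i * B i)"
        unfolding R_def C_def Bj_def by (rule finner_mat_arr[OF J])
      moreover have "(\<Sum>i\<in>tidx K D. B i * B i) \<ge> 0" by (intro sum_nonneg) simp
      ultimately show ?thesis by (simp add: \<epsilon>_def tnorm_def power2_eq_square)
    qed
    have fAB: "finner R C (\<lambda>r c. Aj r c - Bj r c) (\<lambda>r c. Aj r c - Bj r c) \<le> d\<^sup>2"
    proof -
      have "(\<lambda>r c. Aj r c - Bj r c) = mat_arr J (\<lambda>i. A i - B i)"
        by (simp add: Aj_def Bj_def mat_arr_def)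
      then have "finner R C (\<lambda>r c. Aj r c - Bj r c) (\<lambda>r c. Aj r c - Bj r c) = (\<Sum>i\<in>tidx K D. (A i - B i) * (A i - B i))"
        unfolding R_def C_def using finner_mat_arr[OF J] by simp
      moreover have "(\<Sum>i\<in>tidx K D. (A i - B i) * (A i - B i)) \<ge> 0" by (intro sum_nonneg) simp
      ultimately show ?thesis by (simp add: d_def power2_eq_square)
    qed
    have tA: "finner R C Aj Aj > 0" by (rule norm_pert(1)[OF fBB e0 fAB d0 de])
    have a2: "finner R C (\<lambda>r c. Aj r c / sqrt (finner R C Aj Aj) - Bj r c / \<epsilon>) (\<lambda>r c. Aj r c / sqrt (finner R C Aj Aj) - Bj r c / \<epsilon>)
          \<le> d\<^sup>2 / (\<epsilon> * (\<epsilon> - d))" by (rule norm_pert(2)[OF fBB e0 fAB d0 de])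
    have sB: "sqrt (finner R C Bj Bj) = \<epsilon>" using fBB e0 by simp
    have tB: "finner R C Bj Bj > 0" using fBB e0 by simp
    obtain p q' where pq: "QE_mat R C Aj = H KJ p" "QE_mat R C Bj = H KJ q'" "prob KJ p" "prob KJ q'"
      and s2: "(\<Sum>i<KJ. \<bar>p i - q' i\<bar>) \<le> 2 * sqrt (finner R C (\<lambda>r c. Aj r c / sqrt (finner R C Aj Aj) - Bj r c / \<epsilon>) (\<lambda>r c. Aj r c / sqrt (finner R C Aj Aj) - Bj r c / \<epsilon>))"
      using QE_cont[OF fR fC tA tB] unfolding sB KJc by blast
    define s where "s = (\<Sum>i<KJ. \<bar>p i - q' i\<bar>)"
    have s0: "0 \<le> s" by (simp add: s_def sum_nonneg)
    have "d\<^sup>2 / (\<epsilon> * (\<epsilon> - d)) \<le> (q * \<epsilon>)\<^sup>2 / (\<epsilon> * (0.833 * \<epsilon>))"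
    proof (rule frac_le)
      show "d\<^sup>2 \<le> (q * \<epsilon>)\<^sup>2" using dq d0 by (simp add: power_mono)
      show "0 < \<epsilon> * (0.833 * \<epsilon>)" using e0 by simp
      show "\<epsilon> * (0.833 * \<epsilon>) \<le> \<epsilon> * (\<epsilon> - d)" using e0 dq2 by (intro mult_left_mono) auto
    qed simp
    also have "\<dots> = q\<^sup>2 / 0.833" using e0 by (simp add: power2_eq_square field_simps)
    finally have a2': "d\<^sup>2 / (\<epsilon> * (\<epsilon> - d)) \<le> q\<^sup>2 / 0.833" .
    have "s\<^sup>2 \<le> (2 * sqrt (d\<^sup>2 / (\<epsilon> * (\<epsilon> - d))))\<^sup>2"
      using s2 s0 a2 unfolding s_def by (intro power_mono) (auto intro: order_trans)
    also have "\<dots> = 4 * (d\<^sup>2 / (\<epsilon> * (\<epsilon> - d)))" using d0 de e0 by (simp add: power_mult_distrib)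
    also have "\<dots> \<le> 4 * (q\<^sup>2 / 0.833)" using a2' by simp
    also have "\<dots> \<le> (0.3672 * x\<^sup>2)\<^sup>2"
    proof -
      have "4 * (q\<^sup>2 / 0.833) = (4 * 0.167\<^sup>2 / 0.833) * (x\<^sup>2)\<^sup>2"
        unfolding q_def by (simp only: power_mult_distrib) simp
      also have "\<dots> \<le> 0.3672\<^sup>2 * (x\<^sup>2)\<^sup>2" by (intro mult_right_mono) (simp_all add: power2_eq_square)
      also have "\<dots> = (0.3672 * x\<^sup>2)\<^sup>2" by (simp only: power_mult_distrib)
      finally show ?thesis .
    qed
    finally have "s\<^sup>2 \<le> (0.3672 * x\<^sup>2)\<^sup>2" .
    then have sx: "s \<le> 0.3672 * x\<^sup>2" using s0 by (simp add: power2_le_iff_abs_le)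
    have "x\<^sup>2 \<le> 1" using x0 x1 by (simp add: power_le_one)
    then have "0.3672 * x\<^sup>2 \<le> 0.3672" by simp
    then have "s \<le> 0.3672" using sx by linarith
    then have se: "s \<le> exp (-1)" using exp_m1_ge by linarith
    have "\<bar>H KJ p - H KJ q'\<bar> \<le> s * ln (real KJ) + eta s"
      unfolding s_def by (rule fannes[OF pq(3,4) KJ0 se[unfolded s_def]])
    also have "\<dots> \<le> s * L + eta s" using KJL s0 by (simp add: KJ_def mult_left_mono)
    also have "\<dots> \<le> x * L" by (rule final_num[OF L23 x0 x1 s0 sx])
    also have "\<dots> = \<gamma>" using gL gam by (simp add: x_def)
    finally show ?thesis using QA QB pq by simp
  qed
qed

lemma numeric_M:
  fixes M \<delta> \<gamma> L \<epsilon> :: real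
  assumes M: "M > 0" and d: "0 < \<delta>" "\<delta> < 1" and g: "\<gamma> > 0" and L: "\<gamma> < L" and e: "\<epsilon> > 0"
    and Mb: "M \<ge> 128 * ln (2 / \<delta>) * L ^ 4 / (\<epsilon>\<^sup>2 * \<gamma> ^ 4)"
  shows "1 / sqrt M + sqrt (2 * ln (1 / \<delta>) / M) \<le> 0.167 * (\<gamma> / L)\<^sup>2 * \<epsilon>"
proof -
  define v where "v = ln (1 / \<delta>)"
  have v0: "v \<ge> 0" using d by (simp add: v_def)
  define ell where "ell = ln (2 / \<delta>)"
  have ellv: "ell = ln 2 + v" using d by (simp add: ell_def v_def ln_div)
  have ell0: "ell \<ge> 2/3 + v" using ln2_ge_two_thirds ellv by simp
  have L0: "L > 0" using g L by simp
  define w where "w = sqrt (2 * v)"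
  have w0: "w \<ge> 0" using v0 by (simp add: w_def)
  have w2: "w\<^sup>2 = 2 * v" using v0 by (simp add: w_def)
  define a where "a = 1 + w"
  have lhs: "1 / sqrt M + sqrt (2 * ln (1 / \<delta>) / M) = a / sqrt M"
    using M by (simp add: a_def w_def v_def real_sqrt_divide add_divide_distrib)
  have sq: "sqrt M \<ge> sqrt (128 * ell) * L\<^sup>2 / (\<epsilon> * \<gamma>\<^sup>2)"
  proof -
    have "sqrt (128 * ell * L ^ 4 / (\<epsilon>\<^sup>2 * \<gamma> ^ 4)) \<le> sqrt M" using Mb by (simp add: ell_def)
    moreover have "sqrt (128 * ell * L ^ 4 / (\<epsilon>\<^sup>2 * \<gamma> ^ 4)) = sqrt (128 * ell) * L\<^sup>2 / (\<epsilon> * \<gamma>\<^sup>2)"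
    proof -
      have "L ^ 4 = (L\<^sup>2)\<^sup>2" "\<gamma> ^ 4 = (\<gamma>\<^sup>2)\<^sup>2" by (simp_all add: power_mult[symmetric])
      then have "128 * ell * L ^ 4 / (\<epsilon>\<^sup>2 * \<gamma> ^ 4) = (128 * ell) * (L\<^sup>2 / (\<epsilon> * \<gamma>\<^sup>2))\<^sup>2"
        by (simp add: power_divide power_mult_distrib)
      then show ?thesis using e g by (simp add: real_sqrt_mult)
    qed
    ultimately show ?thesis by simp
  qed
  have key: "a \<le> 0.167 * sqrt (128 * ell)"
  proof -
    have "a\<^sup>2 \<le> 0.167\<^sup>2 * (128 * ell)"
    proof -
      have "a\<^sup>2 = 1 + 2 * w + w\<^sup>2" by (simp add: a_def power2_eq_square algebra_simps)
      have h0: "0 \<le> (784896 / 1000000) * (w - 1000000 / 784896)\<^sup>2" by simp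
      have h1: "(784896 / 1000000) * (w - 1000000 / 784896)\<^sup>2 = (784896 / 1000000) * w\<^sup>2 - 2 * w + 1000000 / 784896"
        by (simp add: power2_eq_square algebra_simps)
      have h2: "0.167\<^sup>2 * (128 * (2/3 + v)) = (3569792 / 1000000) * (2/3) + (1784896 / 1000000) * w\<^sup>2"
        unfolding w2 by (simp add: algebra_simps power2_eq_square)
      have h3: "0.167\<^sup>2 * (128 * (2/3 + v)) \<le> 0.167\<^sup>2 * (128 * ell)" using ell0 by simp
      show ?thesis using h0 h1 h2 h3 \<open>a\<^sup>2 = 1 + 2 * w + w\<^sup>2\<close> by linarith
    qed
    then have "sqrt (a\<^sup>2) \<le> sqrt (0.167\<^sup>2 * (128 * ell))" by (rule real_sqrt_le_mono)
    then show ?thesis using w0 ell0 v0 by (simp add: a_def real_sqrt_mult)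
  qed
  have "a / sqrt M \<le> a / (sqrt (128 * ell) * L\<^sup>2 / (\<epsilon> * \<gamma>\<^sup>2))"
  proof (rule divide_left_mono[OF sq])
    show "0 \<le> a" using w0 by (simp add: a_def)
    show "0 < sqrt M * (sqrt (128 * ell) * L\<^sup>2 / (\<epsilon> * \<gamma>\<^sup>2))" using M ell0 v0 L0 e g by simp
  qed
  also have "\<dots> = a / sqrt (128 * ell) * ((\<gamma> / L)\<^sup>2 * \<epsilon>)"
    using L0 e g ell0 v0 by (simp add: field_simps power2_eq_square)
  also have "\<dots> \<le> 0.167 * ((\<gamma> / L)\<^sup>2 * \<epsilon>)"
  proof (rule mult_right_mono)
    have "sqrt (128 * ell) > 0" using ell0 v0 by simp
    then show "a / sqrt (128 * ell) \<le> 0.167" using key by (simp add: divide_le_eq)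
  qed (use e in simp)
  finally show ?thesis unfolding lhs by simp
qed

theorem proposition4:
  fixes N P M :: nat
    and D :: "nat \<Rightarrow> nat"
    and \<mu> :: "(nat \<Rightarrow> nat) \<Rightarrow> nat"
    and Dist :: "(((nat \<Rightarrow> nat) \<Rightarrow> nat \<Rightarrow> real) \<times> real) measure"
    and \<delta> \<gamma> :: real
  assumes "N > 0" and "P > 0"
    and "\<And>n. n < N ^ P \<Longrightarrow> D n > 0"
    and "bij_betw \<mu> (grid N P) {0..<N ^ P}"
    and "prob_space Dist"
    and "\<And>n j. n \<in> grid N P \<Longrightarrow> j < D (\<mu> n) \<Longrightarrow> (\<lambda>z. fst z n j) \<in> borel_measurable Dist"
    and "snd \<in> borel_measurable Dist"
    and "AE z in Dist. (\<forall>n\<in>grid N P. sqrt (\<Sum>j<D (\<mu> n). (fst z n j)\<^sup>2) \<le> 1)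
                       \<and> snd z \<in> {1, -1}"
    and "0 < \<delta>" and "\<delta> < 1" and "\<gamma> > 0"
    and "tnorm (N ^ P) D (D_pop N P \<mu> Dist) \<noteq> 0"
    and "M > 0"
    and "real M \<ge> 128 * ln (2 / \<delta>) * (ln (real (Max (DJ (N ^ P) D ` Pow {0..<N ^ P})))) ^ 4
                   / ((tnorm (N ^ P) D (D_pop N P \<mu> Dist))\<^sup>2 * \<gamma> ^ 4)"
  shows "\<exists>E \<in> sets (PiM {0..<M} (\<lambda>_. Dist)).
           E \<subseteq> {\<omega> \<in> space (PiM {0..<M} (\<lambda>_. Dist)).
                  \<forall>J \<subseteq> {0..<N ^ P}.
                    \<bar>QE (N ^ P) D (D_emp N P \<mu> M \<omega>) J - QE (N ^ P) D (D_pop N P \<mu> Dist) J\<bar> \<le> \<gamma>}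
         \<and> measure (PiM {0..<M} (\<lambda>_. Dist)) E \<ge> 1 - \<delta>"
proof -
  define K where "K = N ^ P"
  define T where "T = tidx K D"
  define gi where "gi n = the_inv_into (grid N P) \<mu> n" for n
  have bij: "bij_betw \<mu> (grid N P) {0..<K}" using assms(4) by (simp add: K_def)
  have inj: "inj_on \<mu> (grid N P)" and img: "\<mu> ` grid N P = {0..<K}"
    using bij by (auto simp: bij_betw_def)
  have gi_in: "gi n \<in> grid N P" if "n < K" for n
    unfolding gi_def by (rule the_inv_into_into[OF inj]) (use img that in auto)
  have mu_gi: "\<mu> (gi n) = n" if "n < K" for n
    unfolding gi_def by (rule f_the_inv_into_f[OF inj]) (use img that in auto)
  interpret Dp: prob_space Dist by (rule assms(5))
  have Dpos: "\<And>n. n < K \<Longrightarrow> D n > 0" using assms(3) by (simp add: K_def)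
  have fT: "finite T" unfolding T_def by (rule finite_tidx)
  have fgrid: "finite (grid N P)" unfolding grid_def by (intro finite_PiE) auto
  define X where "X z i = data_tensor N P \<mu> z i" for z i
  have X_eq: "X z i = snd z * (\<Prod>n<K. fst z (gi n) (i n))" for z i
    by (simp add: X_def data_tensor_def K_def gi_def)
  have iT: "i n < D n" if "i \<in> T" "n < K" for i n
    using that by (auto simp: T_def tidx_def PiE_iff)
  have Xm: "(\<lambda>z. X z i) \<in> borel_measurable Dist" if i: "i \<in> T" for i
  proof -
    have "(\<lambda>z. fst z (gi n) (i n)) \<in> borel_measurable Dist" if n: "n \<in> {..<K}" for n
    proof (rule assms(6))
      show "gi n \<in> grid N P" using gi_in n by simp
      show "i n < D (\<mu> (gi n))" using iT[OF i] mu_gi n by simp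
    qed
    then have "(\<lambda>z. \<Prod>n<K. fst z (gi n) (i n)) \<in> borel_measurable Dist"
      by (rule borel_measurable_prod)
    then show ?thesis unfolding X_eq using assms(7) by (intro borel_measurable_times) auto
  qed
  define Gd where "Gd = {z \<in> space Dist. (\<forall>n\<in>grid N P. sqrt (\<Sum>j<D (\<mu> n). (fst z n j)\<^sup>2) \<le> 1) \<and> snd z \<in> {1, -1}}"
  have Gd_sets: "Gd \<in> sets Dist"
  proof -
    have "{z \<in> space Dist. \<forall>n\<in>grid N P. sqrt (\<Sum>j<D (\<mu> n). (fst z n j)\<^sup>2) \<le> 1} \<in> sets Dist"
    proof (rule sets.sets_Collect_finite_All[OF _ fgrid])
      fix n assume n: "n \<in> grid N P"
      have [measurable]: "(\<lambda>z. sqrt (\<Sum>j<D (\<mu> n). (fst z n j)\<^sup>2)) \<in> borel_measurable Dist"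
      proof -
        have "(\<lambda>z. fst z n j) \<in> borel_measurable Dist" if "j \<in> {..<D (\<mu> n)}" for j
          using assms(6)[OF n] that by simp
        then have "(\<lambda>z. \<Sum>j<D (\<mu> n). (fst z n j)\<^sup>2) \<in> borel_measurable Dist"
          by (intro borel_measurable_sum borel_measurable_power)
        then show ?thesis by measurable
      qed
      show "{z \<in> space Dist. sqrt (\<Sum>j<D (\<mu> n). (fst z n j)\<^sup>2) \<le> 1} \<in> sets Dist" by measurable
    qed
    moreover have "{z \<in> space Dist. snd z \<in> {1, -1}} \<in> sets Dist"
      using assms(7) by measurable
    ultimately have "{z \<in> space Dist. \<forall>n\<in>grid N P. sqrt (\<Sum>j<D (\<mu> n). (fst z n j)\<^sup>2) \<le> 1} \<inter> {z \<in> space Dist. snd z \<in> {1, -1}} \<in> sets Dist"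
      by blast
    moreover have "Gd = {z \<in> space Dist. \<forall>n\<in>grid N P. sqrt (\<Sum>j<D (\<mu> n). (fst z n j)\<^sup>2) \<le> 1} \<inter> {z \<in> space Dist. snd z \<in> {1, -1}}"
      unfolding Gd_def by blast
    ultimately show ?thesis by simp
  qed
  have Gd_AE: "AE z in Dist. z \<in> Gd"
    using assms(8) AE_space[of Dist] unfolding Gd_def by eventually_elim auto
  define Y where "Y z i = (if z \<in> Gd then X z i else 0)" for z i
  have Ym: "(\<lambda>z. Y z i) \<in> borel_measurable Dist" if "i \<in> T" for i
    unfolding Y_def by (rule measurable_If_set) (use Xm[OF that] Gd_sets in auto)
  have Y1: "\<forall>z\<in>space Dist. (\<Sum>i\<in>T. (Y z i)\<^sup>2) \<le> 1"
  proof
    fix z assume z: "z \<in> space Dist"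
    show "(\<Sum>i\<in>T. (Y z i)\<^sup>2) \<le> 1"
    proof (cases "z \<in> Gd")
      case False then show ?thesis by (simp add: Y_def)
    next
      case True
      have sn: "(snd z)\<^sup>2 = 1" using True by (auto simp: Gd_def)
      have fac: "0 \<le> (\<Sum>j\<in>{0..<D n}. (fst z (gi n) j)\<^sup>2) \<and> (\<Sum>j\<in>{0..<D n}. (fst z (gi n) j)\<^sup>2) \<le> 1"
        if n: "n \<in> {0..<K}" for n
      proof -
        have "sqrt (\<Sum>j<D (\<mu> (gi n)). (fst z (gi n) j)\<^sup>2) \<le> 1"
          using True gi_in[of n] n by (auto simp: Gd_def)
        then have "(\<Sum>j<D n. (fst z (gi n) j)\<^sup>2) \<le> 1" using mu_gi[of n] n by simp
        then show ?thesis by (simp add: atLeast0LessThan sum_nonneg)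
      qed
      have "(\<Sum>i\<in>T. (Y z i)\<^sup>2) = (\<Sum>i\<in>T. (snd z)\<^sup>2 * (\<Prod>n\<in>{0..<K}. (fst z (gi n) (i n))\<^sup>2))"
        using True by (simp add: Y_def X_eq power_mult_distrib prod_power_distrib atLeast0LessThan)
      also have "\<dots> = (\<Sum>i\<in>T. (\<Prod>n\<in>{0..<K}. (fst z (gi n) (i n))\<^sup>2))" using sn by simp
      also have "\<dots> = (\<Prod>n\<in>{0..<K}. \<Sum>j\<in>{0..<D n}. (fst z (gi n) j)\<^sup>2)"
        unfolding T_def tidx_def by (rule prod_sum_PiE[symmetric]) auto
      also have "\<dots> \<le> 1" by (rule prod_le_1) (use fac in auto)
      finally show ?thesis .
    qed
  qed
  define pop where "pop = D_pop N P \<mu> Dist"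
  have pop_eq: "pop i = (\<integral>z. Y z i \<partial>Dist)" if "i \<in> T" for i
  proof -
    have "pop i = (\<integral>z. X z i \<partial>Dist)" by (simp add: pop_def D_pop_def X_def)
    also have "\<dots> = (\<integral>z. Y z i \<partial>Dist)"
      by (rule integral_cong_AE[OF Xm[OF that] Ym[OF that]]) (use Gd_AE in \<open>auto simp: Y_def\<close>)
    finally show ?thesis .
  qed
  define Pi where "Pi = PiM {0..<M} (\<lambda>_. Dist)"
  interpret Pp: prob_space Pi unfolding Pi_def by (rule prob_space_PiM) (rule assms(5))
  have Mpos: "M > 0" by (rule assms(13))
  define mY where "mY i = (\<integral>z. Y z i \<partial>Dist)" for i
  define v where "v \<omega> i = (1 / real M) * (\<Sum>m<M. Y (\<omega> m) i) - mY i" for \<omega> i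
  define F where "F \<omega> = sqrt (\<Sum>i\<in>T. (v \<omega> i)\<^sup>2)" for \<omega>
  have F_L2: "F \<omega> = L2_set (v \<omega>) T" for \<omega> by (simp add: F_def L2_set_def)
  have Ysp: "(\<lambda>\<omega>. Y (\<omega> m) i) \<in> borel_measurable Pi" if "m < M" "i \<in> T" for m i
  proof -
    have m: "m \<in> {0..<M}" using that by simp
    show ?thesis unfolding Pi_def
      using measurable_compose[OF measurable_component_singleton[OF m] Ym[OF that(2)]] by simp
  qed
  have vm: "(\<lambda>\<omega>. v \<omega> i) \<in> borel_measurable Pi" if "i \<in> T" for i
    unfolding v_def using Ysp that by (intro borel_measurable_diff borel_measurable_times borel_measurable_sum) auto
  have Fm: "F \<in> borel_measurable Pi"
    unfolding F_def using vm by (intro measurable_compose[OF _ borel_measurable_sqrt] borel_measurable_sum borel_measurable_power) auto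
  have Ybd: "\<bar>Y z i\<bar> \<le> 1" if "z \<in> space Dist" "i \<in> T" for z i
  proof -
    have "(Y z i)\<^sup>2 \<le> (\<Sum>i\<in>T. (Y z i)\<^sup>2)" using fT that by (intro member_le_sum) auto
    then have "(Y z i)\<^sup>2 \<le> 1" using Y1 that by auto
    then show ?thesis by (simp add: abs_square_le_1)
  qed
  have L2Y: "L2_set (Y z) T \<le> 1" if "z \<in> space Dist" for z
    using Y1 that by (simp add: L2_set_def)
  have om_sp: "\<omega> m \<in> space Dist" if "\<omega> \<in> space Pi" "m < M" for \<omega> m
    using that by (auto simp: Pi_def space_PiM PiE_iff)
  have FB: "\<forall>\<omega>\<in>space Pi. \<bar>F \<omega>\<bar> \<le> sqrt (4 * real (card T))"
  proof
    fix \<omega> assume \<omega>: "\<omega> \<in> space Pi"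
    have "(v \<omega> i)\<^sup>2 \<le> 4" if i: "i \<in> T" for i
    proof -
      have "\<bar>\<Sum>m<M. Y (\<omega> m) i\<bar> \<le> (\<Sum>m<M. \<bar>Y (\<omega> m) i\<bar>)" by (rule sum_abs)
      also have "\<dots> \<le> (\<Sum>m<M. 1)" by (intro sum_mono Ybd om_sp[OF \<omega>] i) auto
      finally have "\<bar>(1 / real M) * (\<Sum>m<M. Y (\<omega> m) i)\<bar> \<le> 1" using Mpos by (simp add: abs_mult field_simps)
      moreover have "\<bar>mY i\<bar> \<le> 1" unfolding mY_def
        using Dp.abs_integral_le_const[OF Ym[OF i]] Ybd i by blast
      ultimately have "\<bar>v \<omega> i\<bar> \<le> 2" unfolding v_def by linarith
      then have "\<bar>v \<omega> i\<bar>\<^sup>2 \<le> 2\<^sup>2" by (intro power_mono) auto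
      then show ?thesis by simp
    qed
    then have "(\<Sum>i\<in>T. (v \<omega> i)\<^sup>2) \<le> (\<Sum>i\<in>T. 4)" by (intro sum_mono)
    then show "\<bar>F \<omega>\<bar> \<le> sqrt (4 * real (card T))" by (simp add: F_def sum_nonneg)
  qed
  have Fc: "\<forall>xx\<in>space Pi. \<forall>m\<in>{0..<M}. \<forall>y\<in>space Dist. \<bar>F (xx(m := y)) - F xx\<bar> \<le> 2 / real M"
  proof (intro ballI)
    fix xx m y assume xx: "xx \<in> space Pi" and m: "m \<in> {0..<M}" and y: "y \<in> space Dist"
    define w where "w i = (1 / real M) * (Y y i + - Y (xx m) i)" for i
    have diff: "v (xx(m := y)) i = v xx i + w i" for i
    proof -
      have "(\<Sum>m'<M. Y ((xx(m := y)) m') i) = (\<Sum>m'<M. Y (xx m') i + (if m' = m then Y y i - Y (xx m) i else 0))"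
        by (intro sum.cong refl) auto
      also have "\<dots> = (\<Sum>m'<M. Y (xx m') i) + (Y y i - Y (xx m) i)" using m by (simp add: sum.distrib)
      finally have eqS: "(\<Sum>m'<M. Y ((xx(m := y)) m') i) = (\<Sum>m'<M. Y (xx m') i) + (Y y i - Y (xx m) i)" .
      show ?thesis unfolding v_def w_def eqS by (simp add: algebra_simps)
    qed
    have L2w: "L2_set w T \<le> 2 / real M"
    proof -
      have "L2_set w T = (1 / real M) * L2_set (\<lambda>i. Y y i + - Y (xx m) i) T"
        unfolding w_def using L2_set_right_distrib[of "1 / real M" "\<lambda>i. Y y i + - Y (xx m) i" T] by simp
      also have "\<dots> \<le> (1 / real M) * (L2_set (Y y) T + L2_set (\<lambda>i. - Y (xx m) i) T)"
        by (intro mult_left_mono L2_set_triangle_ineq) simp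
      also have "L2_set (\<lambda>i. - Y (xx m) i) T = L2_set (Y (xx m)) T" by (simp add: L2_set_def)
      also have "(1 / real M) * (L2_set (Y y) T + L2_set (Y (xx m)) T) \<le> (1 / real M) * (1 + 1)"
        using L2Y[OF y] L2Y[OF om_sp[OF xx]] m by (intro mult_left_mono add_mono) auto
      finally show ?thesis by simp
    qed
    have L2mw: "L2_set (\<lambda>i. - w i) T = L2_set w T" by (simp add: L2_set_def)
    have "F (xx(m := y)) \<le> F xx + L2_set w T"
      unfolding F_L2 diff by (rule L2_set_triangle_ineq)
    moreover have "F xx \<le> F (xx(m := y)) + L2_set w T"
    proof -
      have "F xx = L2_set (\<lambda>i. v (xx(m := y)) i + - w i) T" unfolding F_L2 diff by simp
      also have "\<dots> \<le> F (xx(m := y)) + L2_set (\<lambda>i. - w i) T"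
        unfolding F_L2 by (rule L2_set_triangle_ineq)
      finally show ?thesis unfolding L2mw .
    qed
    ultimately show "\<bar>F (xx(m := y)) - F xx\<bar> \<le> 2 / real M" using L2w by linarith
  qed
  define t where "t = sqrt (2 * ln (1 / \<delta>) / real M)"
  have lnd: "ln (1 / \<delta>) > 0" using assms(9,10) by simp
  have t0: "t > 0" using lnd Mpos by (simp add: t_def)
  have tail: "measure Pi {\<omega> \<in> space Pi. F \<omega> - (\<integral>\<omega>. F \<omega> \<partial>Pi) \<ge> t} \<le> \<delta>"
  proof -
    have "measure Pi {\<omega> \<in> space Pi. F \<omega> - (\<integral>\<omega>. F \<omega> \<partial>Pi) \<ge> t}
        \<le> exp (- 2 * t\<^sup>2 / (real (card {0..<M}) * (2 / real M)\<^sup>2))"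
      unfolding Pi_def
      by (rule Dp.mcdiarmid_tail[where B="sqrt (4 * real (card T))"]) (use Mpos Fm FB Fc t0 in \<open>auto simp: Pi_def\<close>)
    also have "- 2 * t\<^sup>2 / (real (card {0..<M}) * (2 / real M)\<^sup>2) = - ln (1 / \<delta>)"
      using Mpos lnd by (simp add: t_def power2_eq_square field_simps)
    also have "exp (- ln (1 / \<delta>)) = \<delta>" using assms(9) by (simp add: ln_div)
    finally show ?thesis .
  qed
  have EF: "(\<integral>\<omega>. F \<omega> \<partial>Pi) \<le> 1 / sqrt (real M)"
    unfolding F_def v_def mY_def Pi_def by (rule Dp.mean_norm_bound[OF fT Mpos Ym Y1])
  define E where "E = {\<omega> \<in> space Pi. (\<forall>m\<in>{0..<M}. \<omega> m \<in> Gd) \<and> F \<omega> - (\<integral>\<omega>. F \<omega> \<partial>Pi) < t}"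
  have E_sets: "E \<in> sets Pi"
  proof -
    have "{\<omega> \<in> space Pi. \<forall>m\<in>{0..<M}. \<omega> m \<in> Gd} \<in> sets Pi"
    proof (rule sets.sets_Collect_finite_All)
      fix m assume m: "m \<in> {0..<M}"
      have "(\<lambda>\<omega>. \<omega> m) \<in> measurable Pi Dist" unfolding Pi_def by (rule measurable_component_singleton[OF m])
      then show "{\<omega> \<in> space Pi. \<omega> m \<in> Gd} \<in> sets Pi" using Gd_sets by measurable
    qed simp
    moreover have "{\<omega> \<in> space Pi. F \<omega> - (\<integral>\<omega>. F \<omega> \<partial>Pi) < t} \<in> sets Pi" using Fm by measurable
    ultimately have "{\<omega> \<in> space Pi. \<forall>m\<in>{0..<M}. \<omega> m \<in> Gd} \<inter> {\<omega> \<in> space Pi. F \<omega> - (\<integral>\<omega>. F \<omega> \<partial>Pi) < t} \<in> sets Pi"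
      by blast
    moreover have "E = {\<omega> \<in> space Pi. \<forall>m\<in>{0..<M}. \<omega> m \<in> Gd} \<inter> {\<omega> \<in> space Pi. F \<omega> - (\<integral>\<omega>. F \<omega> \<partial>Pi) < t}"
      unfolding E_def by blast
    ultimately show ?thesis by simp
  qed
  have E_meas: "measure Pi E \<ge> 1 - \<delta>"
  proof -
    define S where "S = {\<omega> \<in> space Pi. F \<omega> - (\<integral>\<omega>. F \<omega> \<partial>Pi) \<ge> t}"
    have S_sets: "S \<in> sets Pi" unfolding S_def using Fm by measurable
    have AEall: "AE \<omega> in Pi. \<forall>m\<in>{0..<M}. \<omega> m \<in> Gd"
    proof (rule AE_finite_allI)
      fix m assume m: "m \<in> {0..<M}"
      show "AE \<omega> in Pi. \<omega> m \<in> Gd" unfolding Pi_def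
        by (rule AE_PiM_component[OF _ m Gd_AE]) (rule assms(5))
    qed simp
    have "measure Pi E = measure Pi (space Pi - S)"
    proof (rule measure_eq_AE)
      show "AE x in Pi. (x \<in> E) = (x \<in> space Pi - S)"
        using AEall by eventually_elim (auto simp: E_def S_def)
      show "E \<in> sets Pi" by (rule E_sets)
      show "space Pi - S \<in> sets Pi" using S_sets by blast
    qed
    also have "\<dots> = 1 - measure Pi S" by (rule Pp.prob_compl[OF S_sets])
    finally show ?thesis using tail unfolding S_def by simp
  qed
  define L where "L = ln (real (Max (DJ K D ` Pow {0..<K})))"
  define \<epsilon> where "\<epsilon> = tnorm K D pop"
  have "\<epsilon> \<ge> 0" by (simp add: \<epsilon>_def tnorm_def sum_nonneg)
  moreover have "\<epsilon> \<noteq> 0" using assms(12) by (simp add: \<epsilon>_def pop_def K_def)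
  ultimately have eps0: "\<epsilon> > 0" by simp
  have E_good: "E \<subseteq> {\<omega> \<in> space Pi. \<forall>J \<subseteq> {0..<K}. \<bar>QE K D (D_emp N P \<mu> M \<omega>) J - QE K D pop J\<bar> \<le> \<gamma>}"
  proof
    fix \<omega> assume \<omega>E: "\<omega> \<in> E"
    then have \<omega>: "\<omega> \<in> space Pi" and good: "\<forall>m\<in>{0..<M}. \<omega> m \<in> Gd"
      and Ft: "F \<omega> - (\<integral>\<omega>. F \<omega> \<partial>Pi) < t" by (auto simp: E_def)
    have emp_eq: "D_emp N P \<mu> M \<omega> i - pop i = v \<omega> i" if "i \<in> T" for i
    proof -
      have "(\<Sum>m<M. data_tensor N P \<mu> (\<omega> m) i) = (\<Sum>m<M. Y (\<omega> m) i)"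
        by (intro sum.cong refl) (use good in \<open>auto simp: Y_def X_def\<close>)
      then show ?thesis using pop_eq[OF that] by (simp add: D_emp_def v_def mY_def)
    qed
    have dist: "sqrt (\<Sum>i\<in>tidx K D. (D_emp N P \<mu> M \<omega> i - pop i)\<^sup>2) = F \<omega>"
      unfolding F_def T_def[symmetric] using emp_eq by simp
    have Fle: "F \<omega> \<le> 1 / sqrt (real M) + t" using Ft EF by linarith
    have "\<bar>QE K D (D_emp N P \<mu> M \<omega>) J - QE K D pop J\<bar> \<le> \<gamma>" if J: "J \<subseteq> {0..<K}" for J
    proof (rule det[OF J Dpos])
      show "tnorm K D pop > 0" using eps0 by (simp add: \<epsilon>_def)
      show "\<gamma> > 0" by (rule assms(11))
      show "ln (real (DJ K D J)) \<le> L"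
      proof -
        have "DJ K D J \<le> Max (DJ K D ` Pow {0..<K})" using J by (intro Max_ge) auto
        moreover have "DJ K D J > 0" by (rule DJ_pos[OF J Dpos])
        ultimately show ?thesis unfolding L_def by simp
      qed
      assume gL: "\<gamma> < L"
      have "F \<omega> \<le> 0.167 * (\<gamma> / L)\<^sup>2 * \<epsilon>"
      proof -
        have "1 / sqrt (real M) + t \<le> 0.167 * (\<gamma> / L)\<^sup>2 * \<epsilon>"
          unfolding t_def
        proof (rule numeric_M)
          show "real M > 0" using Mpos by simp
          show "0 < \<delta>" "\<delta> < 1" "\<gamma> > 0" using assms(9,10,11) by auto
          show "\<gamma> < L" by (rule gL)
          show "\<epsilon> > 0" by (rule eps0)
          show "real M \<ge> 128 * ln (2 / \<delta>) * L ^ 4 / (\<epsilon>\<^sup>2 * \<gamma> ^ 4)"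
            using assms(14) by (simp add: L_def \<epsilon>_def pop_def K_def)
        qed
        then show ?thesis using Fle by linarith
      qed
      then show "sqrt (\<Sum>i\<in>tidx K D. (D_emp N P \<mu> M \<omega> i - pop i)\<^sup>2) \<le> 0.167 * (\<gamma> / L)\<^sup>2 * tnorm K D pop"
        unfolding dist \<epsilon>_def .
    qed
    then show "\<omega> \<in> {\<omega> \<in> space Pi. \<forall>J \<subseteq> {0..<K}. \<bar>QE K D (D_emp N P \<mu> M \<omega>) J - QE K D pop J\<bar> \<le> \<gamma>}"
      using \<omega> by blast
  qed
  show ?thesis
    using E_sets E_meas E_good unfolding Pi_def K_def pop_def by blast
qed

end
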